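(* Let $\mathcal{A}$ be a unital commutative $C^*$-algebra and let $F\in B^a(H_{\mathcal{A}})$ be self-adjoint. If $\alpha\in\mathcal{A}$ and $\alpha-\alpha^*\in G(\mathcal{A})$, then $F-\alpha I$ is invertible in $B^a(H_{\mathcal{A}})$, and $\|(F-\alpha I)^{-1}\|\le 2\|(\alpha-\alpha^* )^{-1}\|$.
   Context: $G(\mathcal{A})$ is the group of invertible elements of $\mathcal{A}$. $H_{\mathcal{A}}=l_2(\mathcal{A})$ is the standard Hilbert $C^*$-module of sequences $(x_1,x_2,\dots)$ in $\mathcal{A}$ with $\sum_k x_k^*x_k$ norm-convergent, inner product $\langle x,y\rangle=\sum_k x_k^*y_k$. $B^a(H_{\mathcal{A}})$ denotes the bounded adjointable $\mathcal{A}$-linear operators on $H_{\mathcal{A}}$. For $\alpha\in\mathcal{A}$, $\alpha I$ is the operator $(x_k)\mapsto(\alpha x_k)$. *)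

theory Defs
  imports "HOL-Analysis.Analysis"
begin

class comm_cstar_algebra = real_normed_algebra_1 + comm_ring_1 + banach +
  fixes cscale :: "complex \<Rightarrow> 'a \<Rightarrow> 'a"
    and cstar :: "'a \<Rightarrow> 'a"
  assumes cscale_add_left: "cscale (a + b) x = cscale a x + cscale b x"
    and cscale_add_right: "cscale a (x + y) = cscale a x + cscale a y"
    and cscale_mult: "cscale (a * b) x = cscale a (cscale b x)"
    and cscale_one: "cscale 1 x = x"
    and cscale_of_real: "cscale (of_real r) x = scaleR r x"
    and norm_cscale: "norm (cscale a x) = cmod a * norm x"
    and cscale_mult_left: "cscale a (x * y) = cscale a x * y"
    and cscale_mult_right: "cscale a (x * y) = x * cscale a y"
    and cstar_cstar: "cstar (cstar x) = x"
    and cstar_add: "cstar (x + y) = cstar x + cstar y"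
    and cstar_cscale: "cstar (cscale a x) = cscale (cnj a) (cstar x)"
    and cstar_mult: "cstar (x * y) = cstar y * cstar x"
    and cstar_identity: "norm (cstar x * x) = norm x ^ 2"

definition HA :: "(nat \<Rightarrow> 'a::comm_cstar_algebra) set" where
  "HA = {x. summable (\<lambda>k. cstar (x k) * x k)}"

definition hinner :: "(nat \<Rightarrow> 'a::comm_cstar_algebra) \<Rightarrow> (nat \<Rightarrow> 'a) \<Rightarrow> 'a" where
  "hinner x y = (\<Sum>k. cstar (x k) * y k)"

definition hnorm :: "(nat \<Rightarrow> 'a::comm_cstar_algebra) \<Rightarrow> real" where
  "hnorm x = sqrt (norm (hinner x x))"

text \<open>Bounded adjointable A-linear operators on H_A (values off H_A are irrelevant).\<close>

definition Ba :: "((nat \<Rightarrow> 'a::comm_cstar_algebra) \<Rightarrow> (nat \<Rightarrow> 'a)) set" where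
  "Ba = {T. (\<forall>x\<in>HA. T x \<in> HA)
          \<and> (\<forall>x\<in>HA. \<forall>y\<in>HA. T (\<lambda>k. x k + y k) = (\<lambda>k. T x k + T y k))
          \<and> (\<forall>x\<in>HA. \<forall>a. T (\<lambda>k. x k * a) = (\<lambda>k. T x k * a))
          \<and> (\<exists>C. \<forall>x\<in>HA. hnorm (T x) \<le> C * hnorm x)
          \<and> (\<exists>S. (\<forall>y\<in>HA. S y \<in> HA) \<and>
                 (\<forall>x\<in>HA. \<forall>y\<in>HA. hinner (T x) y = hinner x (S y)))}"

definition self_adjoint_op :: "((nat \<Rightarrow> 'a::comm_cstar_algebra) \<Rightarrow> (nat \<Rightarrow> 'a)) \<Rightarrow> bool" where
  "self_adjoint_op T \<longleftrightarrow> T \<in> Ba \<and> (\<forall>x\<in>HA. \<forall>y\<in>HA. hinner (T x) y = hinner x (T y))"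

definition opnorm :: "((nat \<Rightarrow> 'a::comm_cstar_algebra) \<Rightarrow> (nat \<Rightarrow> 'a)) \<Rightarrow> real" where
  "opnorm T = Sup {hnorm (T x) | x. x \<in> HA \<and> hnorm x \<le> 1}"

definition is_Ba_inverse :: "((nat \<Rightarrow> 'a::comm_cstar_algebra) \<Rightarrow> (nat \<Rightarrow> 'a)) \<Rightarrow> ((nat \<Rightarrow> 'a) \<Rightarrow> (nat \<Rightarrow> 'a)) \<Rightarrow> bool" where
  "is_Ba_inverse G T \<longleftrightarrow> G \<in> Ba \<and> (\<forall>x\<in>HA. G (T x) = x \<and> T (G x) = x)"

definition scal_op :: "'a::comm_cstar_algebra \<Rightarrow> (nat \<Rightarrow> 'a) \<Rightarrow> (nat \<Rightarrow> 'a)" where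
  "scal_op a x = (\<lambda>k. a * x k)"

definition op_diff :: "((nat \<Rightarrow> 'a::comm_cstar_algebra) \<Rightarrow> (nat \<Rightarrow> 'a)) \<Rightarrow> ((nat \<Rightarrow> 'a) \<Rightarrow> (nat \<Rightarrow> 'a)) \<Rightarrow> (nat \<Rightarrow> 'a) \<Rightarrow> (nat \<Rightarrow> 'a)" where
  "op_diff S T x = (\<lambda>k. S x k - T x k)"

end

theory Submission
  imports Defs
begin

context fixes dummy :: "'a::comm_cstar_algebra" begin end

lemma cstar_zero [simp]: "cstar (0::'a::comm_cstar_algebra) = 0"
  using cstar_add[of "0::'a" 0] by simp

lemma cstar_minus [simp]: "cstar (- x) = - cstar (x::'a::comm_cstar_algebra)"
  using cstar_add[of x "-x"] by (simp add: minus_unique)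

lemma cstar_diff [simp]: "cstar (x - y) = cstar x - cstar (y::'a::comm_cstar_algebra)"
  using cstar_add[of x "-y"] by simp

lemma cstar_one [simp]: "cstar (1::'a::comm_cstar_algebra) = 1"
proof -
  have "cstar (cstar (1::'a) * 1) = cstar 1 * cstar (cstar 1)" by (rule cstar_mult)
  then show ?thesis by (simp add: cstar_cstar)
qed

lemma cstar_scaleR [simp]: "cstar (r *\<^sub>R x) = r *\<^sub>R cstar (x::'a::comm_cstar_algebra)"
  using cstar_cscale[of "of_real r" x] by (simp add: cscale_of_real)

lemma cstar_mult' [simp]: "cstar (x * y) = cstar x * cstar (y::'a::comm_cstar_algebra)"
  by (simp add: cstar_mult mult.commute)

lemma cstar_power [simp]: "cstar (x ^ n) = cstar (x::'a::comm_cstar_algebra) ^ n"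
  by (induct n) auto

lemma cstar_of_real [simp]: "cstar (of_real r :: 'a::comm_cstar_algebra) = of_real r"
  by (simp add: of_real_def)

lemma cstar_cstar' [simp]: "cstar (cstar x) = (x::'a::comm_cstar_algebra)"
  by (rule cstar_cstar)

lemma norm_cstar [simp]: "norm (cstar x) = norm (x::'a::comm_cstar_algebra)"
proof -
  have le: "norm y \<le> norm (cstar y)" for y :: 'a
  proof (cases "y = 0")
    case False
    have "norm y ^ 2 = norm (cstar y * y)" by (simp add: cstar_identity)
    also have "\<dots> \<le> norm (cstar y) * norm y" by (rule norm_mult_ineq)
    finally have "norm y * norm y \<le> norm (cstar y) * norm y" by (simp add: power2_eq_square)
    then show ?thesis using False by simp
  qed simp
  show ?thesis using le[of x] le[of "cstar x"] by simp
qed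

lemma bounded_linear_cstar: "bounded_linear (cstar :: 'a::comm_cstar_algebra \<Rightarrow> 'a)"
  by (rule bounded_linear_intro[where K=1]) (auto simp: cstar_add)

lemma cstar_sum [simp]: "cstar (sum f I) = (\<Sum>i\<in>I. cstar (f i :: 'a::comm_cstar_algebra))"
  by (induct I rule: infinite_finite_induct) (auto simp: cstar_add)

lemma cstar_suminf: "summable f \<Longrightarrow> cstar (suminf f) = (\<Sum>n. cstar (f n :: 'a::comm_cstar_algebra))"
  using bounded_linear.suminf[OF bounded_linear_cstar] by blast

lemma summable_cstar: "summable f \<Longrightarrow> summable (\<lambda>n. cstar (f n :: 'a::comm_cstar_algebra))"
  using bounded_linear.summable[OF bounded_linear_cstar] by blast

lemma cstar_exp: "cstar (exp x) = exp (cstar (x::'a::comm_cstar_algebra))"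
  unfolding exp_def
  by (subst cstar_suminf[OF summable_exp_generic]) (simp add: divide_inverse)

lemma tendsto_cstar: "(f \<longlongrightarrow> l) F \<Longrightarrow> ((\<lambda>x. cstar (f x :: 'a::comm_cstar_algebra)) \<longlongrightarrow> cstar l) F"
  using bounded_linear.tendsto[OF bounded_linear_cstar] by blast

lemma cscale_zero_right [simp]: "cscale z (0::'a::comm_cstar_algebra) = 0"
  using cscale_add_right[of z "0::'a" 0] by simp

lemma cscale_scaleR: "cscale z (r *\<^sub>R x) = r *\<^sub>R cscale z (x::'a::comm_cstar_algebra)"
  by (metis cscale_mult cscale_of_real mult.commute)

lemma bounded_linear_cscale: "bounded_linear (cscale z :: 'a::comm_cstar_algebra \<Rightarrow> 'a)"
  by (rule bounded_linear_intro[where K="cmod z"]) (auto simp: cscale_add_right cscale_scaleR norm_cscale)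

lemma cscale_suminf: "summable f \<Longrightarrow> cscale z (suminf f) = (\<Sum>n. cscale z (f n :: 'a::comm_cstar_algebra))"
  using bounded_linear.suminf[OF bounded_linear_cscale] by blast

lemma summable_cscale: "summable f \<Longrightarrow> summable (\<lambda>n. cscale z (f n :: 'a::comm_cstar_algebra))"
  using bounded_linear.summable[OF bounded_linear_cscale] by blast

lemma cscale_sum: "cscale z (sum f I) = (\<Sum>i\<in>I. cscale z (f i :: 'a::comm_cstar_algebra))"
  by (induct I rule: infinite_finite_induct) (auto simp: cscale_add_right)

lemma cscale_sum_left: "cscale (sum f I) x = (\<Sum>i\<in>I. cscale (f i) (x :: 'a::comm_cstar_algebra))"
  by (induct I rule: infinite_finite_induct) (auto simp: cscale_add_left cscale_of_real[of 0, simplified])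

lemma cscale_power: "cscale (z ^ n) (x ^ n) = (cscale z x) ^ n" for x :: "'a::comm_cstar_algebra"
proof (induct n)
  case 0 then show ?case by (simp add: cscale_one)
next
  case (Suc n)
  have "cscale (z ^ Suc n) (x ^ Suc n) = cscale z (cscale (z^n) (x * x^n))"
    by (simp add: cscale_mult)
  also have "\<dots> = cscale z x * cscale (z^n) (x^n)"
    by (metis cscale_mult_left cscale_mult_right)
  finally show ?case using Suc by simp
qed


definition sa :: "'a::comm_cstar_algebra \<Rightarrow> bool" where "sa h \<longleftrightarrow> cstar h = h"
definition ub :: "'a::comm_cstar_algebra \<Rightarrow> real \<Rightarrow> bool" where
  "ub h c \<longleftrightarrow> (\<forall>t\<ge>0. norm (exp (t *\<^sub>R h)) \<le> exp (t * c))"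

lemma cscale_zero_left [simp]: "cscale 0 (x::'a::comm_cstar_algebra) = 0"
  using cscale_of_real[of 0 x] by simp

lemma cscale_minus_left: "cscale (- z) (x::'a::comm_cstar_algebra) = - cscale z x"
  using cscale_add_left[of z "-z" x] by (simp add: minus_unique)

lemma cscale_decomp: "cscale z (h::'a::comm_cstar_algebra) = Re z *\<^sub>R h + Im z *\<^sub>R cscale \<i> h"
proof -
  have e: "complex_of_real (Re z) + \<i> * complex_of_real (Im z) = z" by (simp add: complex_eq_iff)
  have "cscale z h = cscale (complex_of_real (Re z) + \<i> * complex_of_real (Im z)) h"
    unfolding e ..
  also have "\<dots> = Re z *\<^sub>R h + Im z *\<^sub>R cscale \<i> h"
    by (simp add: cscale_add_left cscale_mult cscale_of_real cscale_scaleR)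
  finally show ?thesis .
qed

lemma sa_J: "sa h \<Longrightarrow> cstar (cscale \<i> h) = - cscale \<i> (h::'a::comm_cstar_algebra)"
  by (simp add: sa_def cstar_cscale cscale_minus_left)

lemma unitary_norm:
  assumes "sa (h::'a::comm_cstar_algebra)"
  shows "norm (exp (s *\<^sub>R cscale \<i> h)) = 1"
proof -
  define w where "w = s *\<^sub>R cscale \<i> h"
  have cw: "cstar w = - w" using sa_J[OF assms] by (simp add: w_def)
  have "norm (exp w) ^ 2 = norm (cstar (exp w) * exp w)" by (simp add: cstar_identity)
  also have "cstar (exp w) * exp w = 1"
    using exp_minus_inverse[of w] by (simp add: cstar_exp cw mult.commute)
  finally have "norm (exp w) ^ 2 = 1" by simp
  then have "norm (exp w) = 1 \<or> norm (exp w) = -1" by (simp add: power2_eq_1_iff)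
  then show ?thesis using norm_ge_zero[of "exp w"] unfolding w_def by linarith
qed

lemma exp_cscale_bound:
  assumes "sa (h::'a::comm_cstar_algebra)" "ub h c" "ub (-h) c"
  shows "norm (exp (cscale z h)) \<le> exp (\<bar>Re z\<bar> * c)"
proof -
  have "exp (cscale z h) = exp (Re z *\<^sub>R h) * exp (Im z *\<^sub>R cscale \<i> h)"
    unfolding cscale_decomp[of z h] by (rule exp_add_commuting) (rule mult.commute)
  then have "norm (exp (cscale z h)) \<le> norm (exp (Re z *\<^sub>R h)) * 1"
    using norm_mult_ineq unitary_norm[OF assms(1)] by metis
  also have "norm (exp (Re z *\<^sub>R h)) \<le> exp (\<bar>Re z\<bar> * c)"
  proof (cases "Re z \<ge> 0")
    case True then show ?thesis using assms(2) by (simp add: ub_def)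
  next
    case False
    have "Re z *\<^sub>R h = (- Re z) *\<^sub>R (-h)" by simp
    then show ?thesis using assms(3) False unfolding ub_def
      by (metis abs_of_neg neg_0_le_iff_le not_le less_eq_real_def)
  qed
  finally show ?thesis by simp
qed

lemma exp_cscale_series:
  "(\<lambda>m. cscale (z^m / of_real (fact m)) (h^m)) sums exp (cscale z (h::'a::comm_cstar_algebra))"
proof -
  have "(\<lambda>m. (cscale z h)^m /\<^sub>R fact m) = (\<lambda>m. cscale (z^m / of_real (fact m)) (h^m))"
  proof
    fix m
    have "(cscale z h)^m /\<^sub>R fact m = inverse (fact m) *\<^sub>R (cscale (z^m) (h^m))"
      by (simp add: cscale_power)
    also have "\<dots> = cscale (of_real (inverse (fact m))) (cscale (z^m) (h^m))"
      by (rule cscale_of_real[symmetric])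
    also have "\<dots> = cscale (of_real (inverse (fact m)) * z^m) (h^m)"
      by (rule cscale_mult[symmetric])
    also have "of_real (inverse (fact m)) * z^m = z^m / of_real (fact m)"
      by (simp add: divide_inverse mult.commute)
    finally show "(cscale z h)^m /\<^sub>R fact m = cscale (z^m / of_real (fact m)) (h^m)" .
  qed
  then show ?thesis using exp_converges[of "cscale z h"] by simp
qed

lemma suminf_norm_bound:
  fixes f :: "nat \<Rightarrow> 'b::banach"
  assumes "summable g" "\<And>n. norm (f n) \<le> g n"
  shows "summable f" "norm (suminf f) \<le> suminf g"
proof -
  have sn: "summable (\<lambda>n. norm (f n))"
    by (rule summable_comparison_test[OF _ assms(1)]) (use assms(2) in auto)
  then show "summable f" by (rule summable_norm_cancel)
  have "norm (suminf f) \<le> (\<Sum>n. norm (f n))" by (rule summable_norm[OF sn])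
  also have "\<dots> \<le> suminf g" by (rule suminf_le[OF assms(2) sn assms(1)])
  finally show "norm (suminf f) \<le> suminf g" .
qed

lemma root_sum:
  fixes N n m :: nat
  assumes "n < N" "m < N"
  defines "\<zeta> \<equiv> exp (\<i> * of_real (2*pi/N))"
  shows "(\<Sum>j<N. (cnj \<zeta> ^ n * \<zeta> ^ m)^j) = (if m = n then of_nat N else 0)"
proof -
  define X where "X = cnj \<zeta> ^ n * \<zeta> ^ m"
  have cz: "cnj \<zeta> = exp (- (\<i> * of_real (2*pi/N)))" by (simp add: \<zeta>_def exp_cnj)
  have "X = exp (of_nat n * (- (\<i> * of_real (2*pi/N)))) * exp (of_nat m * (\<i> * of_real (2*pi/N)))"
    by (simp only: X_def cz) (simp only: \<zeta>_def exp_of_nat_mult)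
  also have "\<dots> = exp (of_nat n * (- (\<i> * of_real (2*pi/N))) + of_nat m * (\<i> * of_real (2*pi/N)))"
    by (rule exp_add[symmetric])
  also have "of_nat n * (- (\<i> * of_real (2*pi/N))) + of_nat m * (\<i> * of_real (2*pi/N))
      = \<i> * of_real (2*pi/N * (real m - real n))"
    by (simp add: algebra_simps add_divide_distrib[symmetric])
  finally have X: "X = exp (\<i> * of_real (2*pi/N * (real m - real n)))" .
  show ?thesis
  proof (cases "m = n")
    case True
    then have "X = 1" using X by simp
    then show ?thesis using True by (simp add: X_def)
  next
    case False
    have N0: "N > 0" using assms by simp
    have "X ^ N = exp (of_nat N * (\<i> * of_real (2*pi/N * (real m - real n))))"
      unfolding X exp_of_nat_mult ..
    also have "of_nat N * (\<i> * of_real (2*pi/N * (real m - real n))) = \<i> * of_real (2*pi * (real m - real n))"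
      using N0 by (simp add: field_simps)
    also have "exp (\<i> * of_real (2*pi * (real m - real n))) = 1"
      unfolding exp_eq_1 by (auto intro!: exI[of _ "int m - int n"])
    finally have XN: "X ^ N = 1" .
    have "X \<noteq> 1"
    proof
      assume "X = 1"
      then have e: "exp (\<i> * complex_of_real (2*pi/N * (real m - real n))) = 1"
        using X by metis
      obtain k :: int where k: "2*pi/N * (real m - real n) = of_int (2*k) * pi"
        using exp_eq_1[THEN iffD1, OF e] by auto
      have k2: "(2*pi) * (real m - real n) = (2*pi) * (of_int k * real N)" using k N0 by (simp add: field_simps)
      then have "real m - real n = of_int k * real N" using mult_left_cancel[of "2*pi" "real m - real n" "of_int k * real N"] k2 by simp
      then have "of_int (int m - int n) = (of_int (k * int N) :: real)" by simp
      then have "int m - int n = k * int N" by (simp only: of_int_eq_iff)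
      moreover have "\<bar>int m - int n\<bar> < int N" using assms by auto
      ultimately have "\<bar>k\<bar> * int N < int N" by (simp add: abs_mult)
      have "k = 0"
      proof (rule ccontr)
        assume "k \<noteq> 0"
        then have "1 \<le> \<bar>k\<bar>" by linarith
        then have "int N \<le> \<bar>k\<bar> * int N" using mult_right_mono[of 1 "\<bar>k\<bar>" "int N"] by simp
        then show False using \<open>\<bar>k\<bar> * int N < int N\<close> by linarith
      qed
      then show False using \<open>int m - int n = k * int N\<close> False by simp
    qed
    then have "(\<Sum>j<N. X^j) = 0" using XN by (simp add: geometric_sum)
    then show ?thesis using False by (simp add: X_def)
  qed
qed


lemma coeff_bound:
  fixes h :: "'a::comm_cstar_algebra"
  assumes h: "sa h" "ub h c" "ub (-h) c" and c: "c \<ge> 0" and R: "R > 0"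
  shows "R^n / fact n * norm (h^n) \<le> exp (c * R)"
proof (rule field_le_epsilon)
  fix \<epsilon> :: real assume \<epsilon>: "\<epsilon> > 0"
  define a where "a m = (R * norm h)^m / fact m" for m
  have sa: "summable a" unfolding a_def[abs_def] using summable_exp_generic[of "R * norm h"] by (simp add: divide_inverse mult.commute)
  from summable_LIMSEQ[OF sa] \<epsilon> obtain N0 where N0: "\<And>N. N \<ge> N0 \<Longrightarrow> dist (\<Sum>i<N. a i) (suminf a) < \<epsilon>"
    unfolding lim_sequentially by blast
  define N where "N = max N0 (Suc n)"
  have NN0: "N \<ge> N0" and nN: "n < N" and N0': "N > 0" by (auto simp: N_def)
  define \<zeta> :: complex where "\<zeta> = exp (\<i> * of_real (2*pi/N))"
  have nz: "norm \<zeta> = 1" by (simp add: \<zeta>_def)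
  define w where "w j = cnj (\<zeta>^j)^n / of_nat N" for j
  define z where "z j = of_real R * \<zeta>^j" for j
  define A where "A = (\<Sum>j<N. cscale (w j) (exp (cscale (z j) h)))"
  define cc where "cc m = (\<Sum>j<N. w j * (z j ^ m / of_real (fact m)))" for m
  have "norm A \<le> (\<Sum>j<N. norm (cscale (w j) (exp (cscale (z j) h))))"
    unfolding A_def by (rule norm_sum)
  also have "\<dots> \<le> (\<Sum>j<N. 1 / real N * exp (c * R))"
  proof (rule sum_mono)
    fix j assume "j \<in> {..<N}"
    have wj: "cmod (w j) = 1 / real N" by (simp add: w_def norm_divide norm_power nz)
    have "\<bar>Re (z j)\<bar> \<le> R"
      using abs_Re_le_cmod[of "z j"] R by (simp add: z_def norm_mult norm_power nz)
    then have "exp (\<bar>Re (z j)\<bar> * c) \<le> exp (c * R)" using c mult_right_mono[of "\<bar>Re (z j)\<bar>" R c] by (simp add: mult.commute)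
    then have "norm (exp (cscale (z j) h)) \<le> exp (c * R)"
      using exp_cscale_bound[OF h, of "z j"] by linarith
    then show "norm (cscale (w j) (exp (cscale (z j) h))) \<le> 1 / real N * exp (c * R)"
      unfolding norm_cscale wj by (simp add: divide_right_mono)
  qed
  also have "\<dots> = exp (c * R)" using N0' by simp
  finally have nA: "norm A \<le> exp (c * R)" .
  have ser: "(\<lambda>m. cscale (cc m) (h^m)) sums A"
  proof -
    have "(\<lambda>m. \<Sum>j<N. cscale (w j * (z j ^ m / of_real (fact m))) (h^m)) sums A"
      unfolding A_def
    proof (rule sums_sum)
      fix j assume "j \<in> {..<N}"
      show "(\<lambda>m. cscale (w j * (z j ^ m / of_real (fact m))) (h^m)) sums cscale (w j) (exp (cscale (z j) h))"
        using bounded_linear.sums[OF bounded_linear_cscale[of "w j"] exp_cscale_series[of "z j" h]]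
        by (simp only: cscale_mult)
    qed
    then show ?thesis by (simp add: cc_def cscale_sum_left)
  qed
  have cc_eq: "cc m = of_real (R^m / fact m) / of_nat N * (\<Sum>j<N. (cnj \<zeta> ^ n * \<zeta> ^ m)^j)" for m
  proof -
    have "w j * (z j ^ m / of_real (fact m)) = of_real (R^m / fact m) / of_nat N * (cnj \<zeta> ^ n * \<zeta> ^ m)^j" for j
      by (simp add: w_def z_def power_mult_distrib field_simps flip: power_mult)
    then show ?thesis by (simp add: cc_def sum_distrib_left)
  qed
  have cc_n: "cc n = of_real (R^n / fact n)"
    using root_sum[OF nN nN] N0' by (simp add: cc_eq \<zeta>_def)
  have cc_0: "cc m = 0" if "m < N" "m \<noteq> n" for m
    using root_sum[OF nN that(1)] that by (simp add: cc_eq \<zeta>_def)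
  have cc_le: "cmod (cc m) \<le> R^m / fact m" for m
  proof -
    have "cmod (\<Sum>j<N. (cnj \<zeta> ^ n * \<zeta> ^ m)^j) \<le> (\<Sum>j<N. cmod ((cnj \<zeta> ^ n * \<zeta> ^ m)^j))" by (rule norm_sum)
    also have "\<dots> = real N" by (simp add: norm_mult norm_power nz)
    finally have "cmod (\<Sum>j<N. (cnj \<zeta> ^ n * \<zeta> ^ m)^j) \<le> real N" .
    moreover have "cmod (cc m) = R^m / fact m / real N * cmod (\<Sum>j<N. (cnj \<zeta> ^ n * \<zeta> ^ m)^j)"
      unfolding cc_eq norm_mult norm_divide norm_of_real norm_of_nat using R by simp
    moreover have "R^m / fact m / real N \<ge> 0" using R by simp
    ultimately have "cmod (cc m) \<le> R^m / fact m / real N * real N"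
      by (metis mult_left_mono)
    then show ?thesis using N0' by simp
  qed
  define d where "d m = cscale (cc m) (h^m) - (if m = n then cscale (cc n) (h^n) else 0)" for m
  have dsum: "d sums (A - cscale (cc n) (h^n))"
    unfolding d_def by (rule sums_diff[OF ser sums_single])
  define g where "g m = (if m < N then 0 else a m)" for m
  have gsum: "g sums (suminf a - (\<Sum>i<N. a i))"
  proof -
    have "(\<lambda>m. a m - (if m \<in> {..<N} then a m else 0)) sums (suminf a - (\<Sum>i\<in>{..<N}. a i))"
      by (rule sums_diff[OF summable_sums[OF sa] sums_If_finite_set]) simp
    moreover have "(\<lambda>m. a m - (if m \<in> {..<N} then a m else 0)) = g" by (auto simp: g_def)
    ultimately show ?thesis by simp
  qed
  have dle: "norm (d m) \<le> g m" for m
  proof (cases "m < N")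
    case True then show ?thesis using cc_0[of m] by (cases "m = n") (auto simp: d_def g_def)
  next
    case False
    then have "m \<noteq> n" using nN by auto
    then have "norm (d m) = cmod (cc m) * norm (h^m)" by (simp add: d_def norm_cscale)
    also have "\<dots> \<le> R^m / fact m * norm h ^ m"
      by (rule mult_mono[OF cc_le norm_power_ineq]) (use R in auto)
    finally show ?thesis using False by (simp add: g_def a_def power_mult_distrib)
  qed
  have "norm (A - cscale (cc n) (h^n)) \<le> suminf g"
    using suminf_norm_bound(2)[OF sums_summable[OF gsum] dle] sums_unique[OF dsum] by simp
  also have "suminf g < \<epsilon>"
    using sums_unique[OF gsum] N0[OF NN0] by (simp add: dist_real_def)
  finally have nd: "norm (A - cscale (cc n) (h^n)) < \<epsilon>" .
  have "R^n / fact n * norm (h^n) = norm (cscale (cc n) (h^n))"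
    unfolding cc_n norm_cscale norm_of_real using R by simp
  also have "\<dots> \<le> norm A + norm (A - cscale (cc n) (h^n))"
    by (metis norm_minus_commute norm_triangle_sub)
  finally show "R^n / fact n * norm (h^n) \<le> exp (c * R) + \<epsilon>" using nA nd by linarith
qed


lemma fact_upper: "n \<ge> 1 \<Longrightarrow> fact n \<le> real n ^ (n+1) / exp (real n - 1)"
proof (induct n rule: dec_induct)
  case base then show ?case by simp
next
  case (step n)
  have n: "real n \<ge> 1" using step by simp
  have l: "ln (1 + 1 / real n) \<ge> 1 / (real n + 1)"
  proof -
    have "ln (1 / (1 + 1 / real n)) \<le> 1 / (1 + 1/real n) - 1"
    proof (rule ln_le_minus_one)
      have "0 \<le> 1 / real n" by simp
      then have "0 < 1 + 1 / real n" by linarith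
      then show "0 < 1 / (1 + 1 / real n)" by simp
    qed
    moreover have "1 / (1 + 1/real n) - 1 = - (1 / (real n + 1))" using n by (simp add: field_simps)
    moreover have "ln (1 / (1 + 1 / real n)) = - ln (1 + 1/real n)"
      using n by (simp add: ln_div)
    ultimately show ?thesis by linarith
  qed
  have "exp 1 \<le> exp ((real n + 1) * ln (1 + 1 / real n))"
    using l n by (simp add: field_simps)
  also have "\<dots> = exp (of_nat (n+1) * ln (1 + 1 / real n))" by simp
  also have "\<dots> = exp (ln (1 + 1 / real n)) ^ (n+1)" by (rule exp_of_nat_mult)
  also have "\<dots> = (1 + 1 / real n) ^ (n+1)"
  proof -
    have "0 \<le> 1 / real n" by simp
    then have "0 < 1 + 1 / real n" by linarith
    then show ?thesis by simp
  qed
  finally have e: "exp 1 * real n ^ (n+1) \<le> (real n + 1) ^ (n+1)"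
    using n by (simp add: field_simps power_divide)
  have "fact (Suc n) = (real n + 1) * fact n" by simp
  also have "\<dots> \<le> (real n + 1) * (real n ^ (n+1) / exp (real n - 1))"
    using step n by (intro mult_left_mono) auto
  also have "\<dots> = (real n + 1) * (exp 1 * real n ^ (n+1)) / exp (real (Suc n) - 1)"
    by (simp add: exp_diff field_simps exp_add[symmetric])
  also have "\<dots> \<le> (real n + 1) * (real n + 1) ^ (n+1) / exp (real (Suc n) - 1)"
    using e n by (intro divide_right_mono mult_left_mono) auto
  also have "\<dots> = real (Suc n) ^ (Suc n + 1) / exp (real (Suc n) - 1)" by (simp add: add.commute)
  finally show ?case .
qed

lemma pow2_growth:
  fixes x :: real assumes "x > 1"
  shows "\<exists>k. exp 1 * 2^k < x ^ (2^k)"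
proof -
  define d where "d = x - 1"
  have d: "d > 0" using assms by (simp add: d_def)
  obtain k where k: "6 / d^2 < 2 ^ k" using real_arch_pow[of 2 "6 / d^2"] by auto
  have k': "6 < 2^k * d^2" using k d by (simp add: field_simps)
  have b: "1 + 2^k * d \<le> x ^ (2^k)"
    using Bernoulli_inequality[of d "2^k"] d by (simp add: d_def)
  have "(2^k * d)^2 \<le> (x ^ (2^k))^2"
    using b d by (intro power_mono) auto
  moreover have "(2::nat)^Suc k = 2^k + 2^k" by simp
  then have "x ^ (2^Suc k) = x^(2^k) * x^(2^k)" by (simp only: power_add)
  ultimately have "2^k * (2^k * d^2) \<le> x ^ (2^(Suc k))"
    by (simp add: power_mult_distrib power2_eq_square mult.commute mult.left_commute)
  moreover have "exp 1 * (2::real)^(Suc k) < 2^k * (2^k * d^2)"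
  proof -
    have "exp 1 * (2::real)^(Suc k) \<le> 3 * 2 * 2^k" using exp_le by simp
    also have "\<dots> < 2^k * (2^k * d^2)" using k' by simp
    finally show ?thesis .
  qed
  ultimately show ?thesis by (intro exI[of _ "Suc k"]) linarith
qed

lemma norm_pow2:
  assumes "sa (h::'a::comm_cstar_algebra)"
  shows "norm (h^(2^k)) = norm h^(2^k)"
proof (induct k)
  case 0 then show ?case by simp
next
  case (Suc k)
  have s: "cstar (h^(2^k)) = h^(2^k)" using assms by (simp add: sa_def)
  have "(2::nat)^Suc k = 2^k + 2^k" by simp
  then have "h ^ (2^Suc k) = h^(2^k) * h^(2^k)" by (simp only: power_add)
  then have "norm (h^(2^Suc k)) = norm (cstar (h^(2^k)) * h^(2^k))"
    by (simp only: s)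
  also have "\<dots> = norm (h^(2^k))^2" by (rule cstar_identity)
  finally have "norm (h^(2^Suc k)) = (norm h^(2^k))^2" using Suc by simp
  then show ?case by (simp add: power_mult[symmetric] mult.commute)
qed

lemma F1_pos:
  fixes h :: "'a::comm_cstar_algebra"
  assumes h: "sa h" "ub h c" "ub (-h) c" and c: "c > 0"
  shows "norm h \<le> c"
proof (rule ccontr)
  assume "\<not> norm h \<le> c"
  then have q: "norm h / c > 1" using c by simp
  obtain k where k: "exp 1 * 2^k < (norm h / c) ^ (2^k)" using pow2_growth[OF q] by blast
  define n :: nat where "n = 2^k"
  have n1: "n \<ge> 1" by (simp add: n_def)
  have R: "real n / c > 0" using c n1 by simp
  have "(real n / c)^n / fact n * norm (h^n) \<le> exp (c * (real n / c))"
    by (rule coeff_bound[OF h less_imp_le[OF c] R])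
  then have "(real n / c)^n * norm h ^ n \<le> exp (real n) * fact n"
    using c by (simp add: n_def norm_pow2[OF h(1)] field_simps)
  also have "\<dots> \<le> exp (real n) * (real n ^ (n+1) / exp (real n - 1))"
    by (intro mult_left_mono fact_upper n1) simp
  also have "\<dots> = exp 1 * real n * real n ^ n"
    by (simp add: exp_diff)
  finally have "real n ^ n * (norm h / c) ^ n \<le> real n ^ n * (exp 1 * real n)"
    using c by (simp add: power_divide field_simps)
  then have "(norm h / c) ^ n \<le> exp 1 * real n"
    using n1 by (simp add: mult_le_cancel_left_pos)
  then show False using k by (simp add: n_def)
qed

lemma F1:
  fixes h :: "'a::comm_cstar_algebra"
  assumes h: "sa h" "ub h c" "ub (-h) c" and c: "c \<ge> 0"
  shows "norm h \<le> c"
proof (rule field_le_epsilon)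
  fix e :: real assume e: "e > 0"
  have ub_mono: "ub g (c + e)" if "ub g c" for g :: 'a
    unfolding ub_def
  proof (intro allI impI)
    fix t :: real assume t: "t \<ge> 0"
    have "norm (exp (t *\<^sub>R g)) \<le> exp (t * c)" using that t by (simp add: ub_def)
    also have "\<dots> \<le> exp (t * (c + e))" using t e by (simp add: field_simps)
    finally show "norm (exp (t *\<^sub>R g)) \<le> exp (t * (c + e))" .
  qed
  show "norm h \<le> c + e"
    by (rule F1_pos[OF h(1) ub_mono[OF h(2)] ub_mono[OF h(3)]]) (use c e in simp)
qed


lemma exp_nat_mult_alg: "exp (of_nat m * y) = exp (y::'a::comm_cstar_algebra) ^ m"
proof (induct m)
  case 0 then show ?case by simp
next
  case (Suc m)
  have "exp (of_nat (Suc m) * y) = exp (y + of_nat m * y)" by (simp add: algebra_simps)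
  also have "\<dots> = exp y * exp (of_nat m * y)" by (rule exp_add_commuting) (simp add: mult.commute)
  finally show ?case using Suc by simp
qed

lemma exp_tail_bound:
  fixes w :: "'a::{real_normed_algebra_1,banach}"
  shows "norm (exp w - (\<Sum>m<K. w^m /\<^sub>R fact m)) \<le> norm w ^ K * exp (norm w)"
proof -
  have s: "summable (\<lambda>m. w^m /\<^sub>R fact m)" by (rule summable_exp_generic)
  have "exp w = (\<Sum>j. w^(j+K) /\<^sub>R fact (j+K)) + (\<Sum>m<K. w^m /\<^sub>R fact m)"
    unfolding exp_def by (rule suminf_split_initial_segment[OF s])
  then have e: "exp w - (\<Sum>m<K. w^m /\<^sub>R fact m) = (\<Sum>j. w^(j+K) /\<^sub>R fact (j+K))" by simp
  have sr: "summable (\<lambda>j. norm w ^ K * (norm w ^ j /\<^sub>R fact j))"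
    by (rule summable_mult[OF summable_exp_generic])
  have le: "norm (w^(j+K) /\<^sub>R fact (j+K)) \<le> norm w ^ K * (norm w ^ j /\<^sub>R fact j)" for j
  proof -
    have "norm (w^(j+K) /\<^sub>R fact (j+K)) = norm (w^(j+K)) / fact (j+K)" by (simp add: divide_inverse mult.commute)
    also have "\<dots> \<le> norm w ^ (j+K) / fact (j+K)"
      by (rule divide_right_mono[OF norm_power_ineq]) simp
    also have "\<dots> \<le> norm w ^ (j+K) / fact j"
      by (intro divide_left_mono) (auto simp: fact_mono)
    also have "\<dots> = norm w ^ K * (norm w ^ j /\<^sub>R fact j)" by (simp add: power_add field_simps)
    finally show ?thesis .
  qed
  have "norm (\<Sum>j. w^(j+K) /\<^sub>R fact (j+K)) \<le> (\<Sum>j. norm w ^ K * (norm w ^ j /\<^sub>R fact j))"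
    by (rule suminf_norm_bound(2)[OF sr le])
  also have "\<dots> = norm w ^ K * exp (norm w)"
    unfolding exp_def by (rule suminf_mult[OF summable_exp_generic])
  finally show ?thesis using e by simp
qed

lemma norm_exp_minus_one: "norm (exp w - 1) \<le> norm (w::'a::comm_cstar_algebra) * exp (norm w)"
  using exp_tail_bound[of w 1] by simp

lemma tendsto_exp_alg:
  assumes "(f \<longlongrightarrow> (l::'a::comm_cstar_algebra)) F"
  shows "((\<lambda>x. exp (f x)) \<longlongrightarrow> exp l) F"
proof -
  have d: "((\<lambda>x. f x - l) \<longlongrightarrow> 0) F" using tendsto_diff[OF assms tendsto_const[of l]] by simp
  have "((\<lambda>x. norm (exp l) * (norm (f x - l) * exp (norm (f x - l)))) \<longlongrightarrow> norm (exp l) * (0 * exp 0)) F"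
    by (intro tendsto_intros tendsto_norm_zero d)
  then have z: "((\<lambda>x. norm (exp l) * (norm (f x - l) * exp (norm (f x - l)))) \<longlongrightarrow> 0) F" by simp
  have "((\<lambda>x. exp (f x) - exp l) \<longlongrightarrow> 0) F"
  proof (rule tendsto_0_le[OF z, of _ 1], rule always_eventually, rule allI)
    fix x
    have "exp (f x) = exp l * exp (f x - l)"
      by (subst exp_add_commuting[symmetric]) (auto simp: mult.commute)
    then have "exp (f x) - exp l = exp l * (exp (f x - l) - 1)" by (simp add: algebra_simps)
    then have "norm (exp (f x) - exp l) \<le> norm (exp l) * norm (exp (f x - l) - 1)"
      by (simp add: norm_mult_ineq)
    also have "\<dots> \<le> norm (exp l) * (norm (f x - l) * exp (norm (f x - l)))"
      by (intro mult_left_mono norm_exp_minus_one) simp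
    finally show "norm (exp (f x) - exp l) \<le> norm (norm (exp l) * (norm (f x - l) * exp (norm (f x - l)))) * 1"
      by simp
  qed
  then show ?thesis using Lim_null by blast
qed

lemma ub_add:
  assumes "ub h a" "ub k b"
  shows "ub (h + k) (a + b)"
  unfolding ub_def
proof (intro allI impI)
  fix t :: real assume t: "t \<ge> 0"
  have "exp (t *\<^sub>R (h + k)) = exp (t *\<^sub>R h) * exp (t *\<^sub>R k)"
    by (simp add: scaleR_add_right exp_add_commuting mult.commute)
  then have "norm (exp (t *\<^sub>R (h + k))) \<le> norm (exp (t *\<^sub>R h)) * norm (exp (t *\<^sub>R k))"
    by (simp add: norm_mult_ineq)
  also have "\<dots> \<le> exp (t * a) * exp (t * b)"
    using assms t by (intro mult_mono) (auto simp: ub_def)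
  also have "\<dots> = exp (t * (a + b))" by (simp add: exp_add[symmetric] algebra_simps)
  finally show "norm (exp (t *\<^sub>R (h + k))) \<le> exp (t * (a + b))" .
qed

lemma ub_mono: "ub h a \<Longrightarrow> a \<le> b \<Longrightarrow> ub h b"
  unfolding ub_def
proof (intro allI impI)
  fix t :: real assume "\<forall>t\<ge>0. norm (exp (t *\<^sub>R h)) \<le> exp (t * a)" "a \<le> b" "t \<ge> 0"
  then show "norm (exp (t *\<^sub>R h)) \<le> exp (t * b)"
    by (meson exp_le_cancel_iff mult_left_mono order_trans)
qed

lemma ub_norm: "ub h (norm h)"
  unfolding ub_def
proof (intro allI impI)
  fix t :: real assume "t \<ge> 0"
  then show "norm (exp (t *\<^sub>R h)) \<le> exp (t * norm h)"
    using norm_exp[of "t *\<^sub>R h"] by simp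
qed

definition pos :: "'a::comm_cstar_algebra \<Rightarrow> bool" where
  "pos p \<longleftrightarrow> sa p \<and> ub (-p) 0"

lemma sa_add: "sa a \<Longrightarrow> sa b \<Longrightarrow> sa (a + b)" by (simp add: sa_def cstar_add)
lemma sa_diff: "sa a \<Longrightarrow> sa b \<Longrightarrow> sa (a - b)" by (simp add: sa_def)
lemma sa_uminus: "sa a \<Longrightarrow> sa (- a)" by (simp add: sa_def)
lemma sa_scaleR: "sa a \<Longrightarrow> sa (r *\<^sub>R a)" by (simp add: sa_def)
lemma sa_mult: "sa a \<Longrightarrow> sa b \<Longrightarrow> sa (a * b)" by (simp add: sa_def)
lemma sa_0: "sa 0" by (simp add: sa_def)

lemma pos_0: "pos 0" by (simp add: pos_def sa_def ub_def)

lemma pos_add: "pos p \<Longrightarrow> pos q \<Longrightarrow> pos (p + q)"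
  unfolding pos_def using ub_add[of "-p" 0 "-q" 0] by (simp add: sa_add add.commute)

lemma pos_scaleR: "pos p \<Longrightarrow> r \<ge> 0 \<Longrightarrow> pos (r *\<^sub>R p)"
  unfolding pos_def ub_def
proof (intro conjI allI impI)
  assume a: "sa p \<and> (\<forall>t\<ge>0. norm (exp (t *\<^sub>R - p)) \<le> exp (t * 0))" "r \<ge> 0"
  then show "sa (r *\<^sub>R p)" by (simp add: sa_scaleR)
  fix t :: real assume "t \<ge> 0"
  then have "norm (exp ((t * r) *\<^sub>R - p)) \<le> exp ((t*r) * 0)" using a by simp
  then show "norm (exp (t *\<^sub>R - (r *\<^sub>R p))) \<le> exp (t * 0)" by simp
qed

lemma pos_sum: "(\<And>i. i \<in> I \<Longrightarrow> pos (f i)) \<Longrightarrow> pos (sum f I)"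
  by (induct I rule: infinite_finite_induct) (auto simp: pos_0 pos_add)

lemma pos_limit:
  assumes "\<And>n. pos (f n)" "f \<longlonglongrightarrow> p"
  shows "pos p"
  unfolding pos_def ub_def
proof (intro conjI allI impI)
  have "(\<lambda>n. cstar (f n)) \<longlonglongrightarrow> cstar p" by (rule tendsto_cstar[OF assms(2)])
  moreover have "(\<lambda>n. cstar (f n)) = f" using assms(1) by (auto simp: pos_def sa_def)
  ultimately show "sa p" using LIMSEQ_unique assms(2) by (auto simp: sa_def)
  fix t :: real assume t: "t \<ge> 0"
  have "(\<lambda>n. norm (exp (t *\<^sub>R - f n))) \<longlonglongrightarrow> norm (exp (t *\<^sub>R - p))"
    by (intro tendsto_norm tendsto_exp_alg tendsto_scaleR tendsto_const tendsto_minus assms(2))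
  moreover have "norm (exp (t *\<^sub>R - f n)) \<le> exp (t * 0)" for n
    using assms(1) t by (simp add: pos_def ub_def)
  ultimately show "norm (exp (t *\<^sub>R - p)) \<le> exp (t * 0)"
    by (intro LIMSEQ_le_const2) auto
qed

lemma pos_suminf: "(\<And>n. pos (f n)) \<Longrightarrow> summable f \<Longrightarrow> pos (suminf f)"
  by (rule pos_limit[of "\<lambda>n. \<Sum>i<n. f i"]) (auto intro: pos_sum summable_LIMSEQ)

lemma norm_mono_pos:
  assumes "pos p" "pos q"
  shows "norm p \<le> norm (p + q)"
proof (rule F1)
  show "sa p" using assms by (simp add: pos_def)
  have "ub ((p + q) + (-q)) (norm (p+q) + 0)"
    by (rule ub_add[OF ub_norm]) (use assms in \<open>simp add: pos_def\<close>)
  then show "ub p (norm (p + q))" by simp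
  show "ub (-p) (norm (p + q))" using assms by (auto simp: pos_def intro: ub_mono)
qed simp

lemma norm_diff_pos:
  assumes "pos p" "pos q"
  shows "norm (p - q) \<le> norm (p + q)"
proof (rule F1)
  show "sa (p - q)" using assms by (simp add: pos_def sa_diff)
  have p2: "pos (2 *\<^sub>R p)" "pos (2 *\<^sub>R q)" using assms by (auto intro: pos_scaleR)
  have u1: "ub ((p + q) + (- (2 *\<^sub>R q))) (norm (p+q) + 0)"
    by (rule ub_add[OF ub_norm]) (use p2 in \<open>simp add: pos_def\<close>)
  have e1: "(p + q) + (- (2 *\<^sub>R q)) = p - q" "norm (p+q) + 0 = norm (p+q)" by (simp_all add: scaleR_2)
  from u1 show "ub (p - q) (norm (p + q))" by (simp only: e1)
  have u2: "ub ((p + q) + (- (2 *\<^sub>R p))) (norm (p+q) + 0)"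
    by (rule ub_add[OF ub_norm]) (use p2 in \<open>simp add: pos_def\<close>)
  have e2: "(p + q) + (- (2 *\<^sub>R p)) = - (p - q)" by (simp add: scaleR_2)
  from u2 show "ub (- (p - q)) (norm (p + q))" by (simp only: e2 e1(2))
qed simp


lemma JJ: "cscale \<i> y * cscale \<i> y = - (y * (y::'a::comm_cstar_algebra))"
proof -
  have "cscale \<i> y * cscale \<i> y = cscale \<i> (y * cscale \<i> y)" by (rule cscale_mult_left[symmetric])
  also have "\<dots> = cscale \<i> (cscale \<i> (y * y))" by (simp add: cscale_mult_right[symmetric])
  also have "\<dots> = cscale (\<i> * \<i>) (y * y)" by (rule cscale_mult[symmetric])
  also have "\<dots> = - (y * y)" by (simp add: cscale_minus_left cscale_one)
  finally show ?thesis .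
qed

lemma small_sq:
  fixes y :: "'a::comm_cstar_algebra"
  assumes y: "sa y" and r: "norm y \<le> 1"
  shows "norm (exp (- ((1/2) *\<^sub>R (y * y)))) \<le> 1 + 4 * norm y ^ 3"
proof -
  define J where "J = cscale \<i> y"
  have nJ: "norm J = norm y" by (simp add: J_def norm_cscale)
  have JJ': "J * J = - (y * y)" by (simp add: J_def JJ)
  have s3: "(\<Sum>m<3. w^m /\<^sub>R fact m) = 1 + w + (1/2) *\<^sub>R (w * w)" for w :: 'a
    by (simp add: numeral_3_eq_3 power2_eq_square)
  have s2: "(\<Sum>m<2. w^m /\<^sub>R fact m) = 1 + w" for w :: 'a
    by (simp add: numeral_2_eq_2)
  define E1 where "E1 = exp J - (1 + J + (1/2) *\<^sub>R (J * J))"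
  define E2 where "E2 = exp (-J) - (1 + (-J) + (1/2) *\<^sub>R ((-J) * (-J)))"
  define u where "u = (1/2) *\<^sub>R (y * y)"
  define E3 where "E3 = exp (-u) - (1 + (-u))"
  have er: "exp (norm y) \<le> 3" using exp_le r by (meson exp_le_cancel_iff order_trans)
  have nE1: "norm E1 \<le> norm y ^ 3 * 3"
  proof -
    have "norm E1 \<le> norm J ^ 3 * exp (norm J)" using exp_tail_bound[of J 3] by (simp add: E1_def s3)
    then show ?thesis using er by (simp add: nJ) (meson mult_left_mono order_trans zero_le_power norm_ge_zero)
  qed
  have nE2: "norm E2 \<le> norm y ^ 3 * 3"
  proof -
    have "norm E2 \<le> norm (-J) ^ 3 * exp (norm (-J))" using exp_tail_bound[of "-J" 3] by (simp only: E2_def s3)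
    then show ?thesis using er by (simp add: nJ) (meson mult_left_mono order_trans zero_le_power norm_ge_zero)
  qed
  have nu: "norm u \<le> norm y ^ 2 / 2"
    by (simp add: u_def power2_eq_square norm_mult_ineq)
  have "norm y ^ 2 \<le> 1" using r by (simp add: power_le_one)
  then have nu1: "norm u \<le> 1" using nu by linarith
  have nE3: "norm E3 \<le> norm y ^ 3"
  proof -
    have "norm E3 \<le> norm (-u) ^ 2 * exp (norm (-u))" using exp_tail_bound[of "-u" 2] by (simp only: E3_def s2)
    also have "\<dots> \<le> (norm y ^ 2 / 2) ^ 2 * 3"
    proof (rule mult_mono)
      show "norm (- u) ^ 2 \<le> (norm y ^ 2 / 2) ^ 2" using nu by (simp add: power_mono)
      show "exp (norm (- u)) \<le> 3" using nu1 exp_le by (simp) (meson exp_le_cancel_iff order_trans)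
    qed auto
    also have "\<dots> = norm y ^ 3 * (norm y * 3 / 4)" by (simp add: power2_eq_square power3_eq_cube field_simps)
    also have "\<dots> \<le> norm y ^ 3 * 1" using r by (intro mult_left_mono) auto
    finally show ?thesis by simp
  qed
  define C where "C = (1/2) *\<^sub>R (exp J + exp (-J))"
  have nC: "norm C \<le> 1"
  proof -
    have "norm (exp J) = 1" using unitary_norm[OF y, of 1] by (simp add: J_def)
    moreover have "norm (exp (-J)) = 1" using unitary_norm[OF y, of "-1"] by (simp add: J_def)
    ultimately show ?thesis unfolding C_def using norm_triangle_ineq[of "exp J" "exp (-J)"] by simp
  qed
  have "exp (-u) = C - (1/2) *\<^sub>R (E1 + E2) + E3"
  proof -
    define h where "h = (1/2) *\<^sub>R (J * J)"
    have mJ: "(-J) * (-J) = J * J" by simp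
    have e: "(exp J + exp (-J)) - ((exp J - (1 + J + h)) + (exp (-J) - (1 + (-J) + h))) = 2 *\<^sub>R (1 + h)"
      by (simp add: algebra_simps scaleR_2)
    have "C - (1/2) *\<^sub>R (E1 + E2) = (1/2) *\<^sub>R ((exp J + exp (-J)) - ((exp J - (1 + J + h)) + (exp (-J) - (1 + (-J) + h))))"
      unfolding C_def E1_def E2_def mJ h_def[symmetric] by (simp only: scaleR_right_diff_distrib)
    also have "\<dots> = 1 + h" unfolding e by simp
    also have "\<dots> = 1 + (-u)" by (simp add: h_def u_def JJ')
    finally show ?thesis by (simp add: E3_def)
  qed
  moreover have "norm (C - (1/2) *\<^sub>R (E1 + E2) + E3) \<le> norm C + (1/2) * (norm E1 + norm E2) + norm E3"
  proof -
    have a: "norm (C - (1/2) *\<^sub>R (E1 + E2) + E3) \<le> norm (C - (1/2) *\<^sub>R (E1 + E2)) + norm E3"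
      by (rule norm_triangle_ineq)
    have b: "norm (C - (1/2) *\<^sub>R (E1 + E2)) \<le> norm C + norm ((1/2) *\<^sub>R (E1 + E2))"
      by (rule norm_triangle_ineq4)
    have c: "norm ((1/2) *\<^sub>R (E1 + E2)) \<le> (1/2) * (norm E1 + norm E2)"
      using norm_triangle_ineq[of E1 E2] by simp
    show ?thesis using a b c by linarith
  qed
  ultimately have "norm (exp (-u)) \<le> norm C + (1/2) * (norm E1 + norm E2) + norm E3" by simp
  also have "\<dots> \<le> 1 + (1/2) * (norm y ^ 3 * 3 + norm y ^ 3 * 3) + norm y ^ 3"
    using nC nE1 nE2 nE3 by (intro add_mono mult_left_mono) auto
  finally show ?thesis by (simp add: u_def)
qed


lemma sq_pos:
  fixes x :: "'a::comm_cstar_algebra"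
  assumes x: "sa x"
  shows "ub (- (x * x)) 0"
  unfolding ub_def
proof (intro allI impI)
  fix t :: real assume t: "t \<ge> 0"
  show "norm (exp (t *\<^sub>R - (x * x))) \<le> exp (t * 0)"
  proof (rule ccontr)
    define v where "v = norm (exp (t *\<^sub>R - (x * x)))"
    assume "\<not> ?thesis"
    then have v1: "v > 1" by (simp add: v_def)
    define a where "a = sqrt (2 * t) * norm x"
    have a0: "a \<ge> 0" using t by (simp add: a_def)
    define B where "B = 4 * a ^ 3"
    have lv: "ln v > 0" using v1 by simp
    obtain j where j: "max a (B / ln v) < 2 ^ j" using real_arch_pow[of 2 "max a (B / ln v)"] by auto
    define \<rho> where "\<rho> = sqrt (2 * t) / 2 ^ j"
    define y where "y = \<rho> *\<^sub>R x"
    have sy: "sa y" using x by (simp add: y_def sa_scaleR)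
    have ny: "norm y = a / 2 ^ j" using t by (simp add: y_def \<rho>_def a_def)
    have ny1: "norm y \<le> 1" using j a0 by (simp add: ny)
    have p4: "(4::real)^j = 2^j * 2^j"
    proof -
      have "(4::real)^j = (2*2)^j" by simp
      also have "\<dots> = 2^j * 2^j" by (rule power_mult_distrib)
      finally show ?thesis .
    qed
    have teq: "t *\<^sub>R - (x * x) = of_nat (4 ^ j) * (- ((1/2) *\<^sub>R (y * y)))"
    proof -
      have "\<rho>^2 = 2 * t / (2^j * 2^j)" using t by (simp add: \<rho>_def power_divide power2_eq_square)
      then have "(4::real) ^ j * ((1/2) * \<rho>^2) = t" unfolding p4 by simp
      then have "t *\<^sub>R - (x * x) = ((4::real) ^ j * ((1/2) * \<rho>^2)) *\<^sub>R - (x * x)" by simp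
      also have "\<dots> = real (4 ^ j) *\<^sub>R (- ((1/2) *\<^sub>R ((\<rho> * \<rho>) *\<^sub>R (x * x))))"
        by (simp add: power2_eq_square)
      also have "(\<rho> * \<rho>) *\<^sub>R (x * x) = y * y" by (simp add: y_def)
      also have "real (4 ^ j) *\<^sub>R (- ((1/2) *\<^sub>R (y * y))) = of_nat (4 ^ j) * (- ((1/2) *\<^sub>R (y * y)))"
        by (simp only: scaleR_conv_of_real of_real_of_nat_eq)
      finally show ?thesis .
    qed
    have "exp (t *\<^sub>R - (x * x)) = exp (- ((1/2) *\<^sub>R (y * y))) ^ (4 ^ j)"
      unfolding teq by (rule exp_nat_mult_alg)
    then have "v \<le> norm (exp (- ((1/2) *\<^sub>R (y * y)))) ^ (4 ^ j)"
      unfolding v_def by (simp add: norm_power_ineq)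
    also have "\<dots> \<le> (1 + 4 * norm y ^ 3) ^ (4 ^ j)"
      by (intro power_mono small_sq[OF sy ny1]) simp
    also have "\<dots> \<le> exp (4 * norm y ^ 3) ^ (4 ^ j)"
      by (intro power_mono exp_ge_add_one_self) (simp)
    also have "\<dots> = exp (of_nat (4 ^ j) * (4 * norm y ^ 3))" by (rule exp_of_nat_mult[symmetric])
    also have "of_nat (4 ^ j) * (4 * norm y ^ 3) = B / 2 ^ j"
    proof -
      have "of_nat (4 ^ j) * (4 * norm y ^ 3) = (2^j * 2^j) * (4 * (a / 2^j) ^ 3)" using p4 by (simp add: ny)
      also have "\<dots> = B / 2 ^ j" by (simp add: B_def power_divide power3_eq_cube field_simps)
      finally show ?thesis .
    qed
    finally have "v \<le> exp (B / 2 ^ j)" .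
    then have "ln v \<le> B / 2 ^ j" using ln_le_cancel_iff[of v "exp (B/2^j)"] v1 by simp
    moreover have "B / ln v < 2 ^ j" using j by simp
    then have "B < 2 ^ j * ln v" using lv by (simp add: field_simps)
    ultimately show False by (simp add: field_simps)
  qed
qed

lemma pos_sq: "sa x \<Longrightarrow> pos (x * x)"
  by (simp add: pos_def sa_mult sq_pos)

lemma pos_cstar_mult: "pos (cstar c * (c::'a::comm_cstar_algebra))"
proof -
  define half :: 'a where "half = of_real (1/2)"
  define jj :: 'a where "jj = cscale \<i> 1"
  have jjjj: "jj * jj = -1" using JJ[of "1::'a"] by (simp add: jj_def)
  have "(2::'a) * half = of_real 2 * of_real (1/2)" by (simp add: half_def)
  also have "\<dots> = of_real (2 * (1/2))" by (rule of_real_mult[symmetric])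
  finally have h2: "2 * half = 1" by simp
  have cjj: "cstar jj = - jj" by (simp add: jj_def cstar_cscale cscale_minus_left)
  define x where "x = half * (c + cstar c)"
  define y where "y = - half * jj * (c - cstar c)"
  have sx: "sa x" by (simp add: sa_def x_def half_def cstar_add add.commute)
  have ch: "cstar half = half" by (simp add: half_def)
  have "cstar y = - cstar half * cstar jj * (cstar c - c)" by (simp add: y_def)
  also have "\<dots> = y" unfolding ch cjj y_def by (simp add: algebra_simps)
  finally have sy: "sa y" by (simp add: sa_def)
  have "x*x + y*y = (half*half) * ((c + cstar c)*(c + cstar c) + (jj*jj) * ((c - cstar c)*(c - cstar c)))"
    by (simp add: x_def y_def algebra_simps)
  also have "\<dots> = (2*half)*(2*half) * (cstar c * c)" unfolding jjjj by (simp add: algebra_simps)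
  also have "\<dots> = cstar c * c" using h2 by simp
  finally have "cstar c * c = x * x + y * y" by simp
  then show ?thesis using pos_add[OF pos_sq[OF sx] pos_sq[OF sy]] by simp
qed


definition jj :: "'a::comm_cstar_algebra" where "jj = cscale \<i> 1"

lemma jj_sq: "jj * jj = (-1::'a::comm_cstar_algebra)"
  using JJ[of "1::'a"] by (simp add: jj_def)

lemma cstar_jj: "cstar jj = - (jj::'a::comm_cstar_algebra)"
  by (simp add: jj_def cstar_cscale cscale_minus_left)

lemma norm_jj: "norm (jj::'a::comm_cstar_algebra) = 1"
  by (simp add: jj_def norm_cscale)

definition ps :: "nat set \<Rightarrow> (nat \<Rightarrow> 'a::comm_cstar_algebra) \<Rightarrow> 'a" where
  "ps I x = (\<Sum>k\<in>I. cstar (x k) * x k)"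

lemma pos_ps: "pos (ps I x)"
  unfolding ps_def by (rule pos_sum) (rule pos_cstar_mult)

lemma real_amgm:
  fixes S A B :: real
  assumes h: "\<And>s. s > 0 \<Longrightarrow> S \<le> s * A + B / s" and A: "A \<ge> 0" and B: "B \<ge> 0"
  shows "S \<le> 2 * sqrt (A * B)"
proof (cases "A > 0 \<and> B > 0")
  case True
  define s where "s = sqrt B / sqrt A"
  have s: "s > 0" using True by (simp add: s_def)
  have "s * A + B / s = sqrt A * sqrt B + sqrt A * sqrt B"
    using True by (simp add: s_def field_simps)
  then show ?thesis using h[OF s] by (simp add: real_sqrt_mult)
next
  case False
  then have "A = 0 \<or> B = 0" using A B by auto
  then show ?thesis
  proof
    assume A0: "A = 0"
    show ?thesis
    proof (rule ccontr)
      assume "\<not> ?thesis"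
      then have S: "S > 0" using A0 by simp
      have "S \<le> B / ((B + 1) / S * 2)" using h[of "(B + 1) / S * 2"] S B A0 by simp
      also have "\<dots> = S * (B / (2 * (B + 1)))" using S B by (simp add: field_simps)
      also have "\<dots> < S * 1" using S B by (intro mult_strict_left_mono) auto
      finally show False by simp
    qed
  next
    assume B0: "B = 0"
    show ?thesis
    proof (rule ccontr)
      assume "\<not> ?thesis"
      then have S: "S > 0" using B0 by simp
      have "S \<le> S / (2 * (A + 1)) * A" using h[of "S / (2 * (A + 1))"] S A B0 by simp
      also have "\<dots> = S * (A / (2 * (A + 1)))" by simp
      also have "\<dots> < S * 1" using S A by (intro mult_strict_left_mono) auto
      finally show False by simp
    qed
  qed
qed

lemma pt_diff:
  fixes a b :: "'a::comm_cstar_algebra" assumes r: "r \<noteq> 0"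
  shows "cstar (r *\<^sub>R a + (1/r) *\<^sub>R b) * (r *\<^sub>R a + (1/r) *\<^sub>R b)
       - cstar (r *\<^sub>R a - (1/r) *\<^sub>R b) * (r *\<^sub>R a - (1/r) *\<^sub>R b)
       = 2 *\<^sub>R (cstar a * b + cstar b * a)"
  using r by (simp add: cstar_add algebra_simps scaleR_2)

lemma pt_sum:
  fixes a b :: "'a::comm_cstar_algebra" assumes r: "r \<noteq> 0"
  shows "cstar (r *\<^sub>R a + (1/r) *\<^sub>R b) * (r *\<^sub>R a + (1/r) *\<^sub>R b)
       + cstar (r *\<^sub>R a - (1/r) *\<^sub>R b) * (r *\<^sub>R a - (1/r) *\<^sub>R b)
       = 2 *\<^sub>R ((r*r) *\<^sub>R (cstar a * a) + (1/(r*r)) *\<^sub>R (cstar b * b))"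
proof -
  have g: "cstar (p + q) * (p + q) + cstar (p - q) * (p - q) = 2 *\<^sub>R (cstar p * p + cstar q * q)" for p q :: 'a
    by (simp add: cstar_add algebra_simps scaleR_2)
  show ?thesis unfolding g by simp
qed

lemma fin_recs:
  fixes x y :: "nat \<Rightarrow> 'a::comm_cstar_algebra"
  shows "norm (\<Sum>k\<in>I. cstar (x k) * y k + cstar (y k) * x k) \<le> 2 * sqrt (norm (ps I x) * norm (ps I y))"
proof (rule real_amgm)
  fix s :: real assume s: "s > 0"
  define r where "r = sqrt s"
  have r: "r > 0" "r * r = s" using s by (auto simp: r_def)
  define P where "P = ps I (\<lambda>k. r *\<^sub>R x k + (1/r) *\<^sub>R y k)"
  define Q where "Q = ps I (\<lambda>k. r *\<^sub>R x k - (1/r) *\<^sub>R y k)"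
  define S where "S = (\<Sum>k\<in>I. cstar (x k) * y k + cstar (y k) * x k)"
  have rne: "r \<noteq> 0" using r by simp
  have "P - Q = (\<Sum>k\<in>I. cstar (r *\<^sub>R x k + (1/r) *\<^sub>R y k) * (r *\<^sub>R x k + (1/r) *\<^sub>R y k)
       - cstar (r *\<^sub>R x k - (1/r) *\<^sub>R y k) * (r *\<^sub>R x k - (1/r) *\<^sub>R y k))"
    by (simp only: P_def Q_def ps_def sum_subtractf)
  also have "\<dots> = (\<Sum>k\<in>I. 2 *\<^sub>R (cstar (x k) * y k + cstar (y k) * x k))"
    by (rule sum.cong[OF refl]) (rule pt_diff[OF rne])
  finally have PQ1: "P - Q = 2 *\<^sub>R S" by (simp add: S_def scaleR_sum_right)
  have "P + Q = (\<Sum>k\<in>I. cstar (r *\<^sub>R x k + (1/r) *\<^sub>R y k) * (r *\<^sub>R x k + (1/r) *\<^sub>R y k)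
       + cstar (r *\<^sub>R x k - (1/r) *\<^sub>R y k) * (r *\<^sub>R x k - (1/r) *\<^sub>R y k))"
    by (simp only: P_def Q_def ps_def sum.distrib)
  also have "\<dots> = (\<Sum>k\<in>I. 2 *\<^sub>R ((r*r) *\<^sub>R (cstar (x k) * x k) + (1/(r*r)) *\<^sub>R (cstar (y k) * y k)))"
    by (rule sum.cong[OF refl]) (rule pt_sum[OF rne])
  finally have PQ2: "P + Q = 2 *\<^sub>R (s *\<^sub>R ps I x + (1/s) *\<^sub>R ps I y)"
    by (simp add: ps_def r(2) scaleR_sum_right sum.distrib scaleR_add_right)
  have "norm (P - Q) \<le> norm (P + Q)"
    by (rule norm_diff_pos) (simp_all add: P_def Q_def pos_ps)
  then have "2 * norm S \<le> 2 * norm (s *\<^sub>R ps I x + (1/s) *\<^sub>R ps I y)"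
    by (simp add: PQ1 PQ2)
  also have "\<dots> \<le> 2 * (s * norm (ps I x) + norm (ps I y) / s)"
    using s norm_triangle_ineq[of "s *\<^sub>R ps I x" "(1/s) *\<^sub>R ps I y"] by simp
  finally show "norm S \<le> s * norm (ps I x) + norm (ps I y) / s" by simp
qed auto

lemma fin_cs:
  fixes x y :: "nat \<Rightarrow> 'a::comm_cstar_algebra"
  shows "norm (\<Sum>k\<in>I. cstar (x k) * y k) \<le> 2 * sqrt (norm (ps I x) * norm (ps I y))"
proof -
  define S1 where "S1 = (\<Sum>k\<in>I. cstar (x k) * y k + cstar (y k) * x k)"
  define x' where "x' = (\<lambda>k. jj * x k)"
  define S2 where "S2 = (\<Sum>k\<in>I. cstar (x' k) * y k + cstar (y k) * x' k)"
  have cj: "cstar (jj::'a) * jj = 1" by (simp add: cstar_jj jj_sq)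
  have pt1: "cstar (jj * a) * (jj * a) = cstar a * a" for a :: 'a
  proof -
    have "cstar (jj * a) * (jj * a) = (cstar jj * jj) * (cstar a * a)" by (simp add: ac_simps)
    then show ?thesis by (simp add: cj)
  qed
  have px: "ps I x' = ps I x"
    unfolding ps_def x'_def by (simp only: pt1)
  have pt2: "2 *\<^sub>R (cstar a * b) = (cstar a * b + cstar b * a) + jj * (cstar (jj * a) * b + cstar b * (jj * a))" for a b :: 'a
  proof -
    have "jj * (cstar (jj * a) * b + cstar b * (jj * a)) = (jj * cstar jj) * (cstar a * b) + (jj*jj) * (cstar b * a)"
      by (simp add: algebra_simps)
    also have "\<dots> = cstar a * b - cstar b * a" by (simp add: cstar_jj jj_sq)
    finally show ?thesis by (simp add: scaleR_2)
  qed
  have eq: "2 *\<^sub>R (\<Sum>k\<in>I. cstar (x k) * y k) = S1 + jj * S2"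
    unfolding S1_def S2_def x'_def
    by (simp only: scaleR_sum_right pt2 sum.distrib sum_distrib_left distrib_left)
  have "2 * norm (\<Sum>k\<in>I. cstar (x k) * y k) = norm (S1 + jj * S2)"
    unfolding eq[symmetric] by simp
  also have "\<dots> \<le> norm S1 + norm (jj * S2)" by (rule norm_triangle_ineq)
  also have "\<dots> \<le> norm S1 + norm (jj::'a) * norm S2" by (simp add: norm_mult_ineq)
  finally have "2 * norm (\<Sum>k\<in>I. cstar (x k) * y k) \<le> norm S1 + norm (jj::'a) * norm S2" .
  also have "\<dots> \<le> 2 * sqrt (norm (ps I x) * norm (ps I y)) + 2 * sqrt (norm (ps I x) * norm (ps I y))"
    using fin_recs[of x y I] fin_recs[of x' y I] px unfolding S1_def S2_def norm_jj by simp
  finally show ?thesis by simp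
qed


lemma HA_iff: "x \<in> HA \<longleftrightarrow> summable (\<lambda>k. cstar (x k) * x k)"
  by (simp add: HA_def)

lemma ps_Cauchy:
  assumes "x \<in> HA" "e > 0"
  shows "\<exists>N. \<forall>m\<ge>N. \<forall>n. norm (ps {m..<n} x) < e"
  using assms unfolding HA_iff summable_Cauchy ps_def by blast

lemma cross_summable:
  assumes x: "x \<in> HA" and y: "y \<in> HA"
  shows "summable (\<lambda>k. cstar (x k) * y k)"
  unfolding summable_Cauchy
proof (intro allI impI)
  fix e :: real assume e: "e > 0"
  obtain N1 where N1: "\<And>m n. m \<ge> N1 \<Longrightarrow> norm (ps {m..<n} x) < e/2"
    using ps_Cauchy[OF x, of "e/2"] e by auto
  obtain N2 where N2: "\<And>m n. m \<ge> N2 \<Longrightarrow> norm (ps {m..<n} y) < e/2"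
    using ps_Cauchy[OF y, of "e/2"] e by auto
  show "\<exists>N. \<forall>m\<ge>N. \<forall>n. norm (\<Sum>k\<in>{m..<n}. cstar (x k) * y k) < e"
  proof (intro exI[of _ "max N1 N2"] allI impI)
    fix m n assume m: "max N1 N2 \<le> m"
    have "norm (ps {m..<n} x) * norm (ps {m..<n} y) < (e/2) * (e/2)"
      using N1[of m n] N2[of m n] m e by (intro mult_strict_mono) auto
    then have "sqrt (norm (ps {m..<n} x) * norm (ps {m..<n} y)) < sqrt ((e/2) * (e/2))"
      by (simp only: real_sqrt_less_iff)
    also have "sqrt ((e/2) * (e/2)) = e/2" by (rule real_sqrt_unique) (use e in \<open>auto simp: power2_eq_square\<close>)
    finally have "sqrt (norm (ps {m..<n} x) * norm (ps {m..<n} y)) < e/2" .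
    then show "norm (\<Sum>k\<in>{m..<n}. cstar (x k) * y k) < e"
      using fin_cs[of x y "{m..<n}"] by linarith
  qed
qed

lemma HA_add: "x \<in> HA \<Longrightarrow> y \<in> HA \<Longrightarrow> (\<lambda>k. x k + y k) \<in> HA"
proof -
  assume x: "x \<in> HA" and y: "y \<in> HA"
  have "summable (\<lambda>k. (cstar (x k) * x k + cstar (x k) * y k) + (cstar (y k) * x k + cstar (y k) * y k))"
    by (intro summable_add cross_summable x y)
  then show ?thesis by (simp add: HA_iff cstar_add algebra_simps)
qed

lemma HA_scal: "x \<in> HA \<Longrightarrow> (\<lambda>k. c * x k) \<in> HA"
proof -
  assume x: "x \<in> HA"
  have "summable (\<lambda>k. (cstar c * c) * (cstar (x k) * x k))"
    using x by (intro summable_mult) (simp add: HA_iff)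
  then show ?thesis by (simp add: HA_iff ac_simps)
qed

lemma HA_mult_right: "x \<in> HA \<Longrightarrow> (\<lambda>k. x k * c) \<in> HA"
  using HA_scal[of x c] by (simp add: mult.commute)

lemma HA_scaleR: "x \<in> HA \<Longrightarrow> (\<lambda>k. r *\<^sub>R x k) \<in> HA"
  using HA_scal[of x "of_real r"] by (simp add: scaleR_conv_of_real)

lemma HA_minus: "x \<in> HA \<Longrightarrow> (\<lambda>k. - x k) \<in> HA"
  using HA_scal[of x "-1"] by simp

lemma HA_diff: "x \<in> HA \<Longrightarrow> y \<in> HA \<Longrightarrow> (\<lambda>k. x k - y k) \<in> HA"
  using HA_add[of x "\<lambda>k. - y k"] HA_minus[of y] by simp

lemma HA_zero: "(\<lambda>k. 0) \<in> HA"
  by (simp add: HA_iff)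

lemma hinner_add_right: "x \<in> HA \<Longrightarrow> y \<in> HA \<Longrightarrow> z \<in> HA \<Longrightarrow>
    hinner x (\<lambda>k. y k + z k) = hinner x y + hinner x z"
  unfolding hinner_def by (simp add: distrib_left suminf_add cross_summable)

lemma hinner_add_left: "x \<in> HA \<Longrightarrow> y \<in> HA \<Longrightarrow> z \<in> HA \<Longrightarrow>
    hinner (\<lambda>k. x k + y k) z = hinner x z + hinner y z"
  unfolding hinner_def by (simp add: cstar_add distrib_right suminf_add cross_summable)

lemma hinner_scal_right: "x \<in> HA \<Longrightarrow> y \<in> HA \<Longrightarrow> hinner x (\<lambda>k. c * y k) = c * hinner x y"
proof -
  assume x: "x \<in> HA" and y: "y \<in> HA"
  have e: "(\<lambda>k. cstar (x k) * (c * y k)) = (\<lambda>k. c * (cstar (x k) * y k))" by (simp add: mult.left_commute)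
  show ?thesis unfolding hinner_def e by (rule suminf_mult[OF cross_summable[OF x y]])
qed

lemma hinner_scal_left: "x \<in> HA \<Longrightarrow> y \<in> HA \<Longrightarrow> hinner (\<lambda>k. c * x k) y = cstar c * hinner x y"
proof -
  assume x: "x \<in> HA" and y: "y \<in> HA"
  have e: "(\<lambda>k. cstar (c * x k) * y k) = (\<lambda>k. cstar c * (cstar (x k) * y k))" by (simp add: mult.assoc)
  show ?thesis unfolding hinner_def e by (rule suminf_mult[OF cross_summable[OF x y]])
qed

lemma hinner_mult_right: "x \<in> HA \<Longrightarrow> y \<in> HA \<Longrightarrow> hinner x (\<lambda>k. y k * c) = hinner x y * c"
  using hinner_scal_right[of x y c] by (simp add: mult.commute)

lemma hinner_cstar: "x \<in> HA \<Longrightarrow> y \<in> HA \<Longrightarrow> hinner y x = cstar (hinner x y)"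
  unfolding hinner_def by (simp only: cstar_suminf[OF cross_summable] cstar_mult cstar_cstar)

lemma hinner_diff_right: "x \<in> HA \<Longrightarrow> y \<in> HA \<Longrightarrow> z \<in> HA \<Longrightarrow>
    hinner x (\<lambda>k. y k - z k) = hinner x y - hinner x z"
  unfolding hinner_def by (simp add: right_diff_distrib suminf_diff cross_summable)

lemma hinner_diff_left: "x \<in> HA \<Longrightarrow> y \<in> HA \<Longrightarrow> z \<in> HA \<Longrightarrow>
    hinner (\<lambda>k. x k - y k) z = hinner x z - hinner y z"
  unfolding hinner_def by (simp add: left_diff_distrib suminf_diff cross_summable)

lemma hinner_scaleR_right: "x \<in> HA \<Longrightarrow> y \<in> HA \<Longrightarrow> hinner x (\<lambda>k. r *\<^sub>R y k) = r *\<^sub>R hinner x y"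
  using hinner_scal_right[of x y "of_real r"] by (simp add: scaleR_conv_of_real)

lemma hinner_scaleR_left: "x \<in> HA \<Longrightarrow> y \<in> HA \<Longrightarrow> hinner (\<lambda>k. r *\<^sub>R x k) y = r *\<^sub>R hinner x y"
  using hinner_scal_left[of x y "of_real r"] by (simp add: scaleR_conv_of_real)

lemma hinner_pos: "x \<in> HA \<Longrightarrow> pos (hinner x x)"
  unfolding hinner_def by (rule pos_suminf) (auto simp: pos_cstar_mult HA_iff)

lemma ps_le_hinner:
  assumes x: "x \<in> HA" and I: "finite I"
  shows "norm (ps I x) \<le> norm (hinner x x)"
proof -
  obtain n where n: "I \<subseteq> {..<n}" using I by (meson finite_nat_iff_bounded subsetI lessThan_iff)
  have s: "summable (\<lambda>k. cstar (x k) * x k)" using x by (simp add: HA_iff)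
  have "ps {..<n} x = ps I x + ps ({..<n} - I) x"
    unfolding ps_def using n by (simp add: sum.subset_diff)
  then have "norm (ps I x) \<le> norm (ps {..<n} x)" by (simp add: norm_mono_pos pos_ps)
  also have "hinner x x = (\<Sum>k. cstar (x (k + n)) * x (k + n)) + ps {..<n} x"
    unfolding hinner_def ps_def by (rule suminf_split_initial_segment[OF s])
  then have "norm (ps {..<n} x) \<le> norm (hinner x x)"
    using norm_mono_pos[OF pos_ps[of "{..<n}" x] pos_suminf[of "\<lambda>k. cstar (x (k + n)) * x (k + n)"]]
    by (simp add: pos_cstar_mult summable_ignore_initial_segment[OF s] add.commute)
  finally show ?thesis .
qed

lemma hnorm_sq: "hnorm x ^ 2 = norm (hinner x x)"
  by (simp add: hnorm_def)

lemma hnorm_ge0: "hnorm x \<ge> 0"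
  by (simp add: hnorm_def)

lemma norm_coord: "x \<in> HA \<Longrightarrow> norm (x k) \<le> hnorm x"
proof -
  assume x: "x \<in> HA"
  have "norm (x k) ^ 2 = norm (ps {k} x)" by (simp add: ps_def cstar_identity)
  also have "\<dots> \<le> hnorm x ^ 2" using ps_le_hinner[OF x, of "{k}"] by (simp add: hnorm_sq)
  finally show ?thesis using hnorm_ge0 by (metis power2_le_imp_le)
qed

lemma hnorm_eq0: "x \<in> HA \<Longrightarrow> hnorm x = 0 \<Longrightarrow> x = (\<lambda>k. 0)"
  using norm_coord by fastforce

lemma recs:
  assumes x: "x \<in> HA" and y: "y \<in> HA"
  shows "norm (hinner x y + hinner y x) \<le> 2 * hnorm x * hnorm y"
proof -
  have s1: "summable (\<lambda>k. cstar (x k) * y k)" and s2: "summable (\<lambda>k. cstar (y k) * x k)"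
    using cross_summable x y by auto
  have "(\<lambda>n. \<Sum>k<n. cstar (x k) * y k + cstar (y k) * x k) \<longlonglongrightarrow> (\<Sum>k. cstar (x k) * y k + cstar (y k) * x k)"
    by (rule summable_LIMSEQ[OF summable_add[OF s1 s2]])
  moreover have "(\<Sum>k. cstar (x k) * y k + cstar (y k) * x k) = hinner x y + hinner y x"
    unfolding hinner_def by (rule suminf_add[OF s1 s2, symmetric])
  ultimately have lim: "(\<lambda>n. \<Sum>k<n. cstar (x k) * y k + cstar (y k) * x k) \<longlonglongrightarrow> hinner x y + hinner y x"
    by simp
  have b: "norm (\<Sum>k<n. cstar (x k) * y k + cstar (y k) * x k) \<le> 2 * hnorm x * hnorm y" for n
  proof -
    have "norm (\<Sum>k<n. cstar (x k) * y k + cstar (y k) * x k) \<le> 2 * sqrt (norm (ps {..<n} x) * norm (ps {..<n} y))"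
      by (rule fin_recs)
    also have "\<dots> \<le> 2 * sqrt (norm (hinner x x) * norm (hinner y y))"
      using ps_le_hinner[OF x, of "{..<n}"] ps_le_hinner[OF y, of "{..<n}"]
      by (simp add: mult_mono)
    also have "\<dots> = 2 * hnorm x * hnorm y" by (simp add: hnorm_def real_sqrt_mult)
    finally show ?thesis .
  qed
  show ?thesis
    by (rule LIMSEQ_le_const2[OF tendsto_norm[OF lim]]) (use b in auto)
qed

lemma cs2:
  assumes x: "x \<in> HA" and y: "y \<in> HA"
  shows "norm (hinner x y) \<le> 2 * hnorm x * hnorm y"
proof -
  have s1: "summable (\<lambda>k. cstar (x k) * y k)" using cross_summable x y by auto
  have lim: "(\<lambda>n. \<Sum>k<n. cstar (x k) * y k) \<longlonglongrightarrow> hinner x y"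
    unfolding hinner_def by (rule summable_LIMSEQ[OF s1])
  have b: "norm (\<Sum>k<n. cstar (x k) * y k) \<le> 2 * hnorm x * hnorm y" for n
  proof -
    have "norm (\<Sum>k<n. cstar (x k) * y k) \<le> 2 * sqrt (norm (ps {..<n} x) * norm (ps {..<n} y))"
      by (rule fin_cs)
    also have "\<dots> \<le> 2 * sqrt (norm (hinner x x) * norm (hinner y y))"
      using ps_le_hinner[OF x, of "{..<n}"] ps_le_hinner[OF y, of "{..<n}"]
      by (simp add: mult_mono)
    also have "\<dots> = 2 * hnorm x * hnorm y" by (simp add: hnorm_def real_sqrt_mult)
    finally show ?thesis .
  qed
  show ?thesis
    by (rule LIMSEQ_le_const2[OF tendsto_norm[OF lim]]) (use b in auto)
qed


lemma hnorm_le_sq: "a \<ge> 0 \<Longrightarrow> norm (hinner x x) \<le> a ^ 2 \<Longrightarrow> hnorm x \<le> a"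
  using power2_le_imp_le[of "hnorm x" a] by (simp add: hnorm_sq)

lemma norm3: "norm (a + b + c) \<le> norm a + norm b + norm (c::'b::real_normed_vector)"
  using norm_triangle_ineq[of "a+b" c] norm_triangle_ineq[of a b] by linarith

lemma hnorm_add:
  assumes x: "x \<in> HA" and y: "y \<in> HA"
  shows "hnorm (\<lambda>k. x k + y k) \<le> hnorm x + hnorm y"
proof (rule hnorm_le_sq)
  have xy: "(\<lambda>k. x k + y k) \<in> HA" by (rule HA_add[OF x y])
  have "hinner (\<lambda>k. x k + y k) (\<lambda>k. x k + y k) = hinner x x + hinner y y + (hinner x y + hinner y x)"
    by (simp add: hinner_add_left[OF x y xy] hinner_add_right[OF x x y] hinner_add_right[OF y x y] algebra_simps)
  then have "norm (hinner (\<lambda>k. x k + y k) (\<lambda>k. x k + y k)) \<le> norm (hinner x x) + norm (hinner y y) + norm (hinner x y + hinner y x)"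
    using norm3 by metis
  also have "\<dots> \<le> hnorm x ^ 2 + hnorm y ^ 2 + 2 * hnorm x * hnorm y"
    using recs[OF x y] by (simp add: hnorm_sq)
  also have "\<dots> = (hnorm x + hnorm y) ^ 2" by (simp add: power2_eq_square algebra_simps)
  finally show "norm (hinner (\<lambda>k. x k + y k) (\<lambda>k. x k + y k)) \<le> (hnorm x + hnorm y) ^ 2" .
qed (simp add: hnorm_ge0)

lemma hnorm_scal:
  assumes x: "x \<in> HA"
  shows "hnorm (\<lambda>k. c * x k) \<le> norm c * hnorm x"
proof (rule hnorm_le_sq)
  have cx: "(\<lambda>k. c * x k) \<in> HA" by (rule HA_scal[OF x])
  have "hinner (\<lambda>k. c * x k) (\<lambda>k. c * x k) = cstar c * (c * hinner x x)"
    by (simp add: hinner_scal_left[OF x cx] hinner_scal_right[OF x x])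
  moreover have "norm (cstar c * (c * hinner x x)) \<le> norm c * norm (c * hinner x x)"
    using norm_mult_ineq[of "cstar c" "c * hinner x x"] by simp
  moreover have "norm c * norm (c * hinner x x) \<le> norm c * (norm c * norm (hinner x x))"
    by (rule mult_left_mono[OF norm_mult_ineq]) simp
  ultimately have "norm (hinner (\<lambda>k. c * x k) (\<lambda>k. c * x k)) \<le> norm c * (norm c * norm (hinner x x))"
    by simp
  also have "\<dots> = (norm c * hnorm x) ^ 2" by (simp add: hnorm_sq[symmetric] power2_eq_square algebra_simps)
  finally show "norm (hinner (\<lambda>k. c * x k) (\<lambda>k. c * x k)) \<le> (norm c * hnorm x) ^ 2" .
qed (simp add: hnorm_ge0)

lemma hnorm_scaleR:
  assumes x: "x \<in> HA"
  shows "hnorm (\<lambda>k. r *\<^sub>R x k) = \<bar>r\<bar> * hnorm x"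
proof -
  have rx: "(\<lambda>k. r *\<^sub>R x k) \<in> HA" by (rule HA_scaleR[OF x])
  have "hinner (\<lambda>k. r *\<^sub>R x k) (\<lambda>k. r *\<^sub>R x k) = (r * r) *\<^sub>R hinner x x"
    by (simp add: hinner_scaleR_left[OF x rx] hinner_scaleR_right[OF x x])
  then show ?thesis by (simp add: hnorm_def real_sqrt_mult abs_mult)
qed

lemma hnorm_minus_commute:
  assumes "x \<in> HA" "y \<in> HA"
  shows "hnorm (\<lambda>k. x k - y k) = hnorm (\<lambda>k. y k - x k)"
proof -
  have "(\<lambda>k. y k - x k) = (\<lambda>k. (-1) *\<^sub>R (x k - y k))" by simp
  then show ?thesis using hnorm_scaleR[OF HA_diff[OF assms], of "-1"] by simp
qed

lemma hnorm_diff_triangle: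
  assumes "x \<in> HA" "y \<in> HA" "z \<in> HA"
  shows "hnorm (\<lambda>k. x k - z k) \<le> hnorm (\<lambda>k. x k - y k) + hnorm (\<lambda>k. y k - z k)"
proof -
  have "(\<lambda>k. x k - z k) = (\<lambda>k. (x k - y k) + (y k - z k))" by simp
  then show ?thesis using hnorm_add[OF HA_diff[OF assms(1,2)] HA_diff[OF assms(2,3)]] by simp
qed

lemma hnorm_zero [simp]: "hnorm (\<lambda>k. 0) = 0"
  by (simp add: hnorm_def hinner_def)

lemma fin_tri:
  "sqrt (norm (ps I (\<lambda>k. u k + v k))) \<le> sqrt (norm (ps I u)) + sqrt (norm (ps I v))"
proof -
  have "ps I (\<lambda>k. u k + v k) = ps I u + ps I v + (\<Sum>k\<in>I. cstar (u k) * v k + cstar (v k) * u k)"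
    by (simp add: ps_def cstar_add algebra_simps sum.distrib)
  then have "norm (ps I (\<lambda>k. u k + v k)) \<le> norm (ps I u) + norm (ps I v) + 2 * sqrt (norm (ps I u) * norm (ps I v))"
    using fin_recs[of u v I] norm3[of "ps I u" "ps I v" "\<Sum>k\<in>I. cstar (u k) * v k + cstar (v k) * u k"] by simp
  also have "\<dots> = (sqrt (norm (ps I u)) + sqrt (norm (ps I v)))^2"
    by (simp add: power2_eq_square algebra_simps real_sqrt_mult)
  finally show ?thesis using real_sqrt_le_mono by fastforce
qed


lemma ps_mono_fin: "finite J \<Longrightarrow> I \<subseteq> J \<Longrightarrow> norm (ps I x) \<le> norm (ps J x)"
proof -
  assume J: "finite J" and IJ: "I \<subseteq> J"
  have "ps J x = ps I x + ps (J - I) x" unfolding ps_def using J IJ by (simp add: sum.subset_diff)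
  then show ?thesis by (simp add: norm_mono_pos pos_ps)
qed

lemma ps_swap: "ps I (\<lambda>k. a k - b k) = ps I (\<lambda>k. b k - a k)"
  unfolding ps_def by (rule sum.cong) (simp_all add: algebra_simps)

lemma HA_complete:
  fixes X :: "nat \<Rightarrow> nat \<Rightarrow> 'a::comm_cstar_algebra"
  assumes X: "\<And>n. X n \<in> HA"
    and C: "\<And>e. e > 0 \<Longrightarrow> \<exists>N. \<forall>m\<ge>N. \<forall>n\<ge>N. hnorm (\<lambda>k. X m k - X n k) < e"
  shows "\<exists>x\<in>HA. \<forall>e>0. \<exists>N. \<forall>n\<ge>N. hnorm (\<lambda>k. X n k - x k) \<le> e"
proof -
  have cc: "Cauchy (\<lambda>n. X n k)" for k
  proof (rule CauchyI)
    fix e :: real assume "e > 0"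
    then obtain N where N: "\<forall>m\<ge>N. \<forall>n\<ge>N. hnorm (\<lambda>k. X m k - X n k) < e" using C by blast
    show "\<exists>M. \<forall>m\<ge>M. \<forall>n\<ge>M. norm (X m k - X n k) < e"
    proof (intro exI allI impI)
      fix m n assume "N \<le> m" "N \<le> n"
      then show "norm (X m k - X n k) < e"
        using N norm_coord[OF HA_diff[OF X[of m] X[of n]], of k] by fastforce
    qed
  qed
  define x where "x k = lim (\<lambda>n. X n k)" for k
  have xl: "(\<lambda>n. X n k) \<longlonglongrightarrow> x k" for k
    using cc[of k] unfolding Cauchy_convergent_iff convergent_LIMSEQ_iff x_def .
  have key: "norm (ps {..<K} (\<lambda>k. X n k - x k)) \<le> e^2"
    if e: "e > 0" and N: "\<forall>m\<ge>N. \<forall>n\<ge>N. hnorm (\<lambda>k. X m k - X n k) < e" and n: "n \<ge> N" for e N n K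
  proof -
    have "(\<lambda>m. ps {..<K} (\<lambda>k. X n k - X m k)) \<longlonglongrightarrow> ps {..<K} (\<lambda>k. X n k - x k)"
      unfolding ps_def by (intro tendsto_intros tendsto_cstar xl)
    moreover have "\<forall>m\<ge>N. norm (ps {..<K} (\<lambda>k. X n k - X m k)) \<le> e^2"
    proof (intro allI impI)
      fix m assume m: "m \<ge> N"
      have "norm (ps {..<K} (\<lambda>k. X n k - X m k)) \<le> hnorm (\<lambda>k. X n k - X m k) ^ 2"
        using ps_le_hinner[OF HA_diff[OF X[of n] X[of m]], of "{..<K}"] by (simp add: hnorm_sq)
      also have "\<dots> \<le> e^2" using N m n by (intro power_mono) (auto simp: hnorm_ge0 less_imp_le)
      finally show "norm (ps {..<K} (\<lambda>k. X n k - X m k)) \<le> e^2" .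
    qed
    ultimately show ?thesis by (intro LIMSEQ_le_const2[OF tendsto_norm]) auto
  qed
  have xHA: "x \<in> HA"
    unfolding HA_iff summable_Cauchy
  proof (intro allI impI)
    fix e :: real assume e: "e > 0"
    define \<epsilon> where "\<epsilon> = sqrt e / 3"
    have \<epsilon>: "\<epsilon> > 0" using e by (simp add: \<epsilon>_def)
    obtain N where N: "\<forall>m\<ge>N. \<forall>n\<ge>N. hnorm (\<lambda>k. X m k - X n k) < \<epsilon>" using C[OF \<epsilon>] by blast
    obtain N' where N': "\<And>p q. p \<ge> N' \<Longrightarrow> norm (ps {p..<q} (X N)) < \<epsilon>^2"
      using ps_Cauchy[OF X, of "\<epsilon>^2" N] \<epsilon> by auto
    show "\<exists>N. \<forall>m\<ge>N. \<forall>n. norm (\<Sum>k\<in>{m..<n}. cstar (x k) * x k) < e"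
    proof (intro exI allI impI)
      fix p q assume p: "N' \<le> p"
      have xe: "x = (\<lambda>k. (x k - X N k) + X N k)" by simp
      have a: "norm (ps {p..<q} (\<lambda>k. x k - X N k)) \<le> \<epsilon>^2"
      proof -
        have "norm (ps {p..<q} (\<lambda>k. x k - X N k)) \<le> norm (ps {..<q} (\<lambda>k. x k - X N k))"
          by (rule ps_mono_fin) auto
        also have "\<dots> \<le> \<epsilon>^2" using key[OF \<epsilon> N, of N q] by (simp add: ps_swap)
        finally show ?thesis .
      qed
      have "sqrt (norm (ps {p..<q} x)) \<le> sqrt (norm (ps {p..<q} (\<lambda>k. x k - X N k))) + sqrt (norm (ps {p..<q} (X N)))"
        using fin_tri[of "{p..<q}" "\<lambda>k. x k - X N k" "X N"] by simp
      also have "\<dots> \<le> \<epsilon> + \<epsilon>"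
      proof (rule add_mono)
        show "sqrt (norm (ps {p..<q} (\<lambda>k. x k - X N k))) \<le> \<epsilon>"
          using real_sqrt_le_mono[OF a] \<epsilon> by simp
        show "sqrt (norm (ps {p..<q} (X N))) \<le> \<epsilon>"
          using real_sqrt_le_mono[OF less_imp_le[OF N'[OF p, of q]]] \<epsilon> by simp
      qed
      finally have "sqrt (norm (ps {p..<q} x)) \<le> 2 * \<epsilon>" by simp
      then have "(sqrt (norm (ps {p..<q} x)))^2 \<le> (2 * \<epsilon>)^2" by (intro power_mono) simp_all
      then have "norm (ps {p..<q} x) \<le> (2 * \<epsilon>)^2" by simp
      also have "(2 * \<epsilon>)^2 = 4 * e / 9" using e by (simp add: \<epsilon>_def power2_eq_square power_divide)
      also have "\<dots> < e" using e by simp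
      finally show "norm (\<Sum>k\<in>{p..<q}. cstar (x k) * x k) < e" by (simp add: ps_def)
    qed
  qed
  show ?thesis
  proof (intro bexI[OF _ xHA] allI impI)
    fix e :: real assume e: "e > 0"
    obtain N where N: "\<forall>m\<ge>N. \<forall>n\<ge>N. hnorm (\<lambda>k. X m k - X n k) < e" using C[OF e] by blast
    show "\<exists>N. \<forall>n\<ge>N. hnorm (\<lambda>k. X n k - x k) \<le> e"
    proof (intro exI allI impI)
      fix n assume n: "N \<le> n"
      have d: "(\<lambda>k. X n k - x k) \<in> HA" by (rule HA_diff[OF X xHA])
      have "(\<lambda>K. ps {..<K} (\<lambda>k. X n k - x k)) \<longlonglongrightarrow> hinner (\<lambda>k. X n k - x k) (\<lambda>k. X n k - x k)"
        unfolding ps_def hinner_def by (rule summable_LIMSEQ) (use d in \<open>simp add: HA_iff\<close>)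
      then have "norm (hinner (\<lambda>k. X n k - x k) (\<lambda>k. X n k - x k)) \<le> e^2"
        using key[OF e N n] by (intro LIMSEQ_le_const2[OF tendsto_norm]) auto
      then show "hnorm (\<lambda>k. X n k - x k) \<le> e" using e by (intro hnorm_le_sq) auto
    qed
  qed
qed


lemma contraction_fix:
  fixes f :: "(nat \<Rightarrow> 'a) \<Rightarrow> (nat \<Rightarrow> 'a::comm_cstar_algebra)"
  assumes fH: "\<And>x. x \<in> HA \<Longrightarrow> f x \<in> HA"
    and fL: "\<And>x y. x \<in> HA \<Longrightarrow> y \<in> HA \<Longrightarrow> hnorm (\<lambda>k. f x k - f y k) \<le> q * hnorm (\<lambda>k. x k - y k)"
    and q: "0 \<le> q" "q < 1"
  shows "\<exists>x\<in>HA. f x = x"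
proof -
  define X where "X n = (f ^^ n) (\<lambda>k. 0)" for n
  have XS: "X (Suc n) = f (X n)" for n by (simp add: X_def)
  have XH: "X n \<in> HA" for n by (induct n) (auto simp: X_def HA_zero fH)
  define D where "D = hnorm (\<lambda>k. X 1 k - X 0 k)"
  have D: "D \<ge> 0" by (simp add: D_def hnorm_ge0)
  have step: "hnorm (\<lambda>k. X (Suc n) k - X n k) \<le> q^n * D" for n
  proof (induct n)
    case 0 then show ?case by (simp add: D_def)
  next
    case (Suc n)
    have "hnorm (\<lambda>k. X (Suc (Suc n)) k - X (Suc n) k) \<le> q * hnorm (\<lambda>k. X (Suc n) k - X n k)"
    proof -
      have e: "(\<lambda>k. X (Suc (Suc n)) k - X (Suc n) k) = (\<lambda>k. f (X (Suc n)) k - f (X n) k)"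
        by (simp add: XS)
      show ?thesis unfolding e by (rule fL[OF XH XH])
    qed
    also have "\<dots> \<le> q * (q^n * D)" using Suc q by (intro mult_left_mono) auto
    finally show ?case by simp
  qed
  have far: "hnorm (\<lambda>k. X (n + m) k - X n k) \<le> D * (\<Sum>i<m. q^(n+i))" for n m
  proof (induct m)
    case 0 then show ?case by simp
  next
    case (Suc m)
    have "hnorm (\<lambda>k. X (n + Suc m) k - X n k) \<le> hnorm (\<lambda>k. X (Suc (n + m)) k - X (n + m) k) + hnorm (\<lambda>k. X (n + m) k - X n k)"
      using hnorm_diff_triangle[OF XH[of "Suc (n+m)"] XH[of "n+m"] XH[of n]] by simp
    also have "\<dots> \<le> q^(n+m) * D + D * (\<Sum>i<m. q^(n+i))" using step Suc by (intro add_mono) auto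
    finally show ?case by (simp add: algebra_simps)
  qed
  have geo: "(\<Sum>i<m. q^(n+i)) \<le> q^n / (1 - q)" for n m
  proof -
    have "(\<Sum>i<m. q^(n+i)) = q^n * (\<Sum>i<m. q^i)" by (simp add: power_add sum_distrib_left)
    also have "(\<Sum>i<m. q^i) \<le> (\<Sum>i. q^i)"
      by (rule sum_le_suminf) (use q in \<open>auto intro: summable_geometric\<close>)
    then have "q^n * (\<Sum>i<m. q^i) \<le> q^n * (\<Sum>i. q^i)" using q by (intro mult_left_mono) auto
    also have "(\<Sum>i. q^i) = 1 / (1 - q)" using q by (simp add: suminf_geometric)
    finally show ?thesis by simp
  qed
  have far2: "hnorm (\<lambda>k. X m k - X n k) \<le> D * (q^n / (1 - q))" if nm: "n \<le> m" for n m
  proof -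
    obtain d where d: "m = n + d" using le_Suc_ex[OF nm] by blast
    have "D * (\<Sum>i<d. q^(n+i)) \<le> D * (q^n / (1 - q))" by (rule mult_left_mono[OF geo D])
    moreover have "hnorm (\<lambda>k. X (n + d) k - X n k) \<le> D * (\<Sum>i<d. q^(n+i))" by (rule far)
    ultimately show ?thesis by (simp add: d)
  qed
  have C: "\<exists>N. \<forall>m\<ge>N. \<forall>n\<ge>N. hnorm (\<lambda>k. X m k - X n k) < e" if e: "e > 0" for e
  proof -
    have "(\<lambda>n. q^n) \<longlonglongrightarrow> 0" using q by (intro LIMSEQ_power_zero) auto
    moreover have "e * (1 - q) / (D + 1) > 0" using e q D by simp
    ultimately have "eventually (\<lambda>n. q^n < e * (1 - q) / (D + 1)) sequentially"
      by (rule order_tendstoD(2))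
    then obtain N where N: "\<And>n. n \<ge> N \<Longrightarrow> q^n < e * (1 - q) / (D + 1)"
      unfolding eventually_sequentially by blast
    have b: "hnorm (\<lambda>k. X m k - X n k) < e" if "n \<le> m" "N \<le> n" for n m
    proof -
      have "hnorm (\<lambda>k. X m k - X n k) \<le> D * (q^n / (1 - q))" by (rule far2[OF that(1)])
      also have "\<dots> \<le> (D + 1) * (q^n / (1 - q))" using q by (intro mult_right_mono) auto
      also have "\<dots> < (D + 1) * ((e * (1 - q) / (D + 1)) / (1 - q))"
        using N[OF that(2)] q D by (intro mult_strict_left_mono divide_strict_right_mono) auto
      also have "\<dots> = e" using q D by simp
      finally show ?thesis .
    qed
    show ?thesis
    proof (intro exI allI impI)
      fix m n assume "N \<le> m" "N \<le> n"
      then show "hnorm (\<lambda>k. X m k - X n k) < e"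
        using b[of n m] b[of m n] hnorm_minus_commute[OF XH[of m] XH[of n]] by (cases "n \<le> m") auto
    qed
  qed
  obtain x where xH: "x \<in> HA" and xl: "\<And>e. e > 0 \<Longrightarrow> \<exists>N. \<forall>n\<ge>N. hnorm (\<lambda>k. X n k - x k) \<le> e"
    using HA_complete[OF XH C] by blast
  have "hnorm (\<lambda>k. f x k - x k) \<le> 0"
  proof (rule field_le_epsilon)
    fix e :: real assume e: "e > 0"
    have e2: "e / 2 > 0" using e by simp
    obtain N where N: "\<And>n. n \<ge> N \<Longrightarrow> hnorm (\<lambda>k. X n k - x k) \<le> e / 2" using xl[OF e2] by blast
    have "hnorm (\<lambda>k. f x k - x k) \<le> hnorm (\<lambda>k. f x k - X (Suc N) k) + hnorm (\<lambda>k. X (Suc N) k - x k)"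
      by (rule hnorm_diff_triangle[OF fH[OF xH] XH xH])
    also have "hnorm (\<lambda>k. f x k - X (Suc N) k) \<le> q * hnorm (\<lambda>k. x k - X N k)"
      unfolding XS by (rule fL[OF xH XH])
    also have "hnorm (\<lambda>k. x k - X N k) = hnorm (\<lambda>k. X N k - x k)" by (rule hnorm_minus_commute[OF xH XH])
    also have "q * hnorm (\<lambda>k. X N k - x k) \<le> 1 * (e / 2)"
      using N[of N] q by (intro mult_mono) (auto simp: hnorm_ge0)
    also have "hnorm (\<lambda>k. X (Suc N) k - x k) \<le> e / 2" using N[of "Suc N"] by simp
    finally show "hnorm (\<lambda>k. f x k - x k) \<le> 0 + e" by simp
  qed
  then have "hnorm (\<lambda>k. f x k - x k) = 0" using hnorm_ge0[of "\<lambda>k. f x k - x k"] by linarith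
  then have z: "(\<lambda>k. f x k - x k) = (\<lambda>k. 0)" by (rule hnorm_eq0[OF HA_diff[OF fH[OF xH] xH], rotated])
  have "f x k = x k" for k using fun_cong[OF z, of k] by simp
  then have "f x = x" by (rule ext)
  then show ?thesis using xH by blast
qed


context
  fixes F :: "(nat \<Rightarrow> 'a::comm_cstar_algebra) \<Rightarrow> (nat \<Rightarrow> 'a)"
  assumes sF: "self_adjoint_op F"
begin

lemma F_HA: "x \<in> HA \<Longrightarrow> F x \<in> HA"
  using sF by (simp add: self_adjoint_op_def Ba_def)

lemma F_add: "x \<in> HA \<Longrightarrow> y \<in> HA \<Longrightarrow> F (\<lambda>k. x k + y k) = (\<lambda>k. F x k + F y k)"
  using sF by (simp add: self_adjoint_op_def Ba_def)

lemma F_mult: "x \<in> HA \<Longrightarrow> F (\<lambda>k. x k * a) = (\<lambda>k. F x k * a)"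
  using sF by (simp add: self_adjoint_op_def Ba_def)

lemma F_sym: "x \<in> HA \<Longrightarrow> y \<in> HA \<Longrightarrow> hinner (F x) y = hinner x (F y)"
  using sF by (simp add: self_adjoint_op_def)

lemma F_bound: "\<exists>L\<ge>0. \<forall>x\<in>HA. hnorm (F x) \<le> L * hnorm x"
proof -
  obtain C where C: "\<forall>x\<in>HA. hnorm (F x) \<le> C * hnorm x"
    using sF by (auto simp: self_adjoint_op_def Ba_def)
  have "\<forall>x\<in>HA. hnorm (F x) \<le> max C 0 * hnorm x"
  proof
    fix x :: "nat \<Rightarrow> 'a" assume "x \<in> HA"
    then have "hnorm (F x) \<le> C * hnorm x" using C by blast
    also have "\<dots> \<le> max C 0 * hnorm x" by (rule mult_right_mono) (auto simp: hnorm_ge0)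
    finally show "hnorm (F x) \<le> max C 0 * hnorm x" .
  qed
  then show ?thesis by (intro exI[of _ "max C 0"]) auto
qed

lemma F_scal: "x \<in> HA \<Longrightarrow> F (\<lambda>k. c * x k) = (\<lambda>k. c * F x k)"
  using F_mult[of x c] by (simp add: mult.commute)

lemma F_scaleR: "x \<in> HA \<Longrightarrow> F (\<lambda>k. r *\<^sub>R x k) = (\<lambda>k. r *\<^sub>R F x k)"
  using F_scal[of x "of_real r"] by (simp add: scaleR_conv_of_real)

lemma F_diff: "x \<in> HA \<Longrightarrow> y \<in> HA \<Longrightarrow> F (\<lambda>k. x k - y k) = (\<lambda>k. F x k - F y k)"
proof -
  assume x: "x \<in> HA" and y: "y \<in> HA"
  have e: "(\<lambda>k. x k - y k) = (\<lambda>k. x k + (-1) * y k)" by simp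
  have a: "F (\<lambda>k. x k + (-1) * y k) = (\<lambda>k. F x k + F (\<lambda>k. (-1) * y k) k)"
    by (rule F_add[OF x HA_scal[OF y]])
  have b: "F (\<lambda>k. (-1) * y k) = (\<lambda>k. (-1) * F y k)" by (rule F_scal[OF y])
  show ?thesis unfolding e a b by simp
qed

definition P :: "real \<Rightarrow> 'a \<Rightarrow> (nat \<Rightarrow> 'a) \<Rightarrow> (nat \<Rightarrow> 'a)" where
  "P s c x = (\<lambda>k. s *\<^sub>R F x k - c * x k)"

lemma P_HA: "x \<in> HA \<Longrightarrow> P s c x \<in> HA"
  unfolding P_def by (intro HA_diff HA_scaleR HA_scal F_HA)

lemma P_diff: "x \<in> HA \<Longrightarrow> y \<in> HA \<Longrightarrow> P s c (\<lambda>k. x k - y k) = (\<lambda>k. P s c x k - P s c y k)"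
  unfolding P_def by (simp add: F_diff algebra_simps)

lemma lower_bound:
  assumes x: "x \<in> HA" and \<beta>: "\<beta> * (c - cstar c) = 1"
  shows "hnorm x \<le> 2 * norm \<beta> * hnorm (P s c x)"
proof -
  define y where "y = P s c x"
  have yH: "y \<in> HA" unfolding y_def by (rule P_HA[OF x])
  have Fx: "F x \<in> HA" by (rule F_HA[OF x])
  have sFx: "(\<lambda>k. s *\<^sub>R F x k) \<in> HA" by (rule HA_scaleR[OF Fx])
  have cx: "(\<lambda>k. c * x k) \<in> HA" by (rule HA_scal[OF x])
  have yx: "hinner y x = s *\<^sub>R hinner (F x) x - cstar c * hinner x x"
    unfolding y_def P_def
    by (simp add: hinner_diff_left[OF sFx cx x] hinner_scaleR_left[OF Fx x] hinner_scal_left[OF x x])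
  have xy: "hinner x y = s *\<^sub>R hinner x (F x) - c * hinner x x"
    unfolding y_def P_def
    by (simp add: hinner_diff_right[OF x sFx cx] hinner_scaleR_right[OF x Fx] hinner_scal_right[OF x x])
  have D: "hinner y x - hinner x y = (c - cstar c) * hinner x x"
    using yx xy F_sym[OF x x] by (simp add: algebra_simps)
  then have xx: "hinner x x = \<beta> * (hinner y x - hinner x y)"
    using \<beta> by (simp add: mult.assoc[symmetric])
  define y' where "y' = (\<lambda>k. jj * y k)"
  have y'H: "y' \<in> HA" unfolding y'_def by (rule HA_scal[OF yH])
  have "hinner y' x + hinner x y' = cstar jj * hinner y x + jj * hinner x y"
    unfolding y'_def by (simp add: hinner_scal_left[OF yH x] hinner_scal_right[OF x yH])
  also have "\<dots> = - jj * (hinner y x - hinner x y)" by (simp add: cstar_jj algebra_simps)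
  finally have e: "hinner y x - hinner x y = jj * (hinner y' x + hinner x y')"
    by (simp add: mult.assoc[symmetric] jj_sq)
  have "hnorm x ^ 2 = norm (\<beta> * (jj * (hinner y' x + hinner x y')))"
    by (simp add: hnorm_sq xx e)
  also have "\<dots> \<le> norm \<beta> * norm (jj * (hinner y' x + hinner x y'))" by (rule norm_mult_ineq)
  also have "\<dots> \<le> norm \<beta> * (norm (jj::'a) * norm (hinner y' x + hinner x y'))"
    by (rule mult_left_mono[OF norm_mult_ineq]) simp
  also have "\<dots> \<le> norm \<beta> * (2 * hnorm y' * hnorm x)"
    using recs[OF y'H x] by (simp add: norm_jj mult_left_mono)
  also have "hnorm y' \<le> hnorm y"
    using hnorm_scal[OF yH, of jj] by (simp add: y'_def norm_jj)
  then have "norm \<beta> * (2 * hnorm y' * hnorm x) \<le> norm \<beta> * (2 * hnorm y * hnorm x)"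
    by (intro mult_left_mono mult_right_mono) (auto simp: hnorm_ge0)
  finally have h: "hnorm x * hnorm x \<le> (2 * norm \<beta> * hnorm y) * hnorm x"
    by (simp add: power2_eq_square algebra_simps)
  show ?thesis
  proof (cases "hnorm x = 0")
    case True then show ?thesis by (simp add: hnorm_ge0)
  next
    case False
    then have "hnorm x > 0" using hnorm_ge0[of x] by simp
    then show ?thesis using h unfolding y_def by (simp add: mult_le_cancel_right)
  qed
qed

end


lemma hnorm_diff_le:
  assumes "u \<in> HA" "v \<in> HA"
  shows "hnorm (\<lambda>k. u k - v k) \<le> hnorm u + hnorm v"
proof -
  have "(\<lambda>k. u k - v k) = (\<lambda>k. u k + (-1) *\<^sub>R v k)" by simp
  then show ?thesis using hnorm_add[OF assms(1) HA_scaleR[OF assms(2), of "-1"]] hnorm_scaleR[OF assms(2), of "-1"] by simp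
qed

context
  fixes F :: "(nat \<Rightarrow> 'a::comm_cstar_algebra) \<Rightarrow> (nat \<Rightarrow> 'a)"
  assumes sF: "self_adjoint_op F"
begin

lemma P_inj:
  assumes x: "x \<in> HA" and y: "y \<in> HA" and \<beta>: "\<beta> * (c - cstar c) = 1" and e: "P F s c x = P F s c y"
  shows "x = y"
proof -
  have "hnorm (\<lambda>k. x k - y k) \<le> 2 * norm \<beta> * hnorm (P F s c (\<lambda>k. x k - y k))"
    by (rule lower_bound[OF sF HA_diff[OF x y] \<beta>])
  also have "P F s c (\<lambda>k. x k - y k) = (\<lambda>k. 0)" by (simp add: P_diff[OF sF x y] e)
  finally have "hnorm (\<lambda>k. x k - y k) = 0" using hnorm_ge0[of "\<lambda>k. x k - y k"] by simp
  then have z: "(\<lambda>k. x k - y k) = (\<lambda>k. 0)" by (rule hnorm_eq0[OF HA_diff[OF x y], rotated])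
  show ?thesis by (rule ext) (use fun_cong[OF z] in simp)
qed

lemma cont_step:
  assumes \<beta>: "\<beta> * (c - cstar c) = 1"
    and L: "\<And>x. x \<in> HA \<Longrightarrow> hnorm (\<lambda>k. F x k - a * x k) \<le> L * hnorm x" and L0: "L \<ge> 0"
    and surj: "\<And>y. y \<in> HA \<Longrightarrow> \<exists>x\<in>HA. P F s c x = y"
    and \<delta>: "0 \<le> \<delta>" "\<delta> * (2 * norm \<beta>) * L \<le> 1/2"
    and y: "y \<in> HA"
  shows "\<exists>x\<in>HA. P F (s + \<delta>) (c + \<delta> *\<^sub>R a) x = y"
proof -
  define Q where "Q x = (\<lambda>k. F x k - a * x k)" for x
  have QH: "x \<in> HA \<Longrightarrow> Q x \<in> HA" for x unfolding Q_def by (intro HA_diff HA_scal F_HA[OF sF])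
  have Qd: "x1 \<in> HA \<Longrightarrow> x2 \<in> HA \<Longrightarrow> Q (\<lambda>k. x1 k - x2 k) = (\<lambda>k. Q x1 k - Q x2 k)" for x1 x2
    unfolding Q_def by (simp add: F_diff[OF sF] algebra_simps)
  define g where "g z = (SOME x. x \<in> HA \<and> P F s c x = z)" for z
  have gH: "g z \<in> HA \<and> P F s c (g z) = z" if "z \<in> HA" for z
  proof -
    have ex: "\<exists>x. x \<in> HA \<and> P F s c x = z" using surj[OF that] by blast
    show ?thesis unfolding g_def by (rule someI_ex[OF ex])
  qed
  define f where "f x = g (\<lambda>k. y k - \<delta> *\<^sub>R Q x k)" for x
  have zH: "x \<in> HA \<Longrightarrow> (\<lambda>k. y k - \<delta> *\<^sub>R Q x k) \<in> HA" for x by (intro HA_diff y HA_scaleR QH)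
  have fH: "x \<in> HA \<Longrightarrow> f x \<in> HA" for x unfolding f_def using gH zH by blast
  define q where "q = \<delta> * (2 * norm \<beta>) * L"
  have fL: "hnorm (\<lambda>k. f x1 k - f x2 k) \<le> q * hnorm (\<lambda>k. x1 k - x2 k)" if x1: "x1 \<in> HA" and x2: "x2 \<in> HA" for x1 x2
  proof -
    have "P F s c (\<lambda>k. f x1 k - f x2 k) = (\<lambda>k. P F s c (f x1) k - P F s c (f x2) k)"
      by (rule P_diff[OF sF fH[OF x1] fH[OF x2]])
    also have "\<dots> = (\<lambda>k. (y k - \<delta> *\<^sub>R Q x1 k) - (y k - \<delta> *\<^sub>R Q x2 k))"
      unfolding f_def using gH[OF zH[OF x1]] gH[OF zH[OF x2]] by simp
    also have "\<dots> = (\<lambda>k. \<delta> *\<^sub>R Q (\<lambda>k. x2 k - x1 k) k)"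
      by (simp add: Qd[OF x2 x1] algebra_simps)
    finally have e: "P F s c (\<lambda>k. f x1 k - f x2 k) = (\<lambda>k. \<delta> *\<^sub>R Q (\<lambda>k. x2 k - x1 k) k)" .
    have A: "hnorm (\<lambda>k. f x1 k - f x2 k) \<le> 2 * norm \<beta> * hnorm (P F s c (\<lambda>k. f x1 k - f x2 k))"
      by (rule lower_bound[OF sF HA_diff[OF fH[OF x1] fH[OF x2]] \<beta>])
    have B: "hnorm (P F s c (\<lambda>k. f x1 k - f x2 k)) = \<delta> * hnorm (Q (\<lambda>k. x2 k - x1 k))"
      unfolding e using hnorm_scaleR[OF QH[OF HA_diff[OF x2 x1]], of \<delta>] \<delta> by simp
    have C: "hnorm (Q (\<lambda>k. x2 k - x1 k)) \<le> L * hnorm (\<lambda>k. x1 k - x2 k)"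
      unfolding Q_def hnorm_minus_commute[OF x1 x2] by (rule L[OF HA_diff[OF x2 x1]])
    have "hnorm (P F s c (\<lambda>k. f x1 k - f x2 k)) \<le> \<delta> * (L * hnorm (\<lambda>k. x1 k - x2 k))"
      unfolding B by (rule mult_left_mono[OF C \<delta>(1)])
    then have "2 * norm \<beta> * hnorm (P F s c (\<lambda>k. f x1 k - f x2 k)) \<le> 2 * norm \<beta> * (\<delta> * (L * hnorm (\<lambda>k. x1 k - x2 k)))"
      by (rule mult_left_mono) simp
    then show ?thesis using A by (simp add: q_def algebra_simps)
  qed
  have q: "0 \<le> q" "q < 1" using \<delta> L0 by (auto simp: q_def)
  obtain x where xH: "x \<in> HA" and fx: "f x = x" using contraction_fix[OF fH fL q] by blast
  have Px: "P F s c x = (\<lambda>k. y k - \<delta> *\<^sub>R Q x k)"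
    using gH[OF zH[OF xH]] fx unfolding f_def by simp
  have "P F (s + \<delta>) (c + \<delta> *\<^sub>R a) x = (\<lambda>k. P F s c x k + \<delta> *\<^sub>R Q x k)"
    by (rule ext) (simp add: P_def[OF sF] Q_def algebra_simps)
  then have "P F (s + \<delta>) (c + \<delta> *\<^sub>R a) x = y" unfolding Px by simp
  then show ?thesis using xH by blast
qed

end


context
  fixes F :: "(nat \<Rightarrow> 'a::comm_cstar_algebra) \<Rightarrow> (nat \<Rightarrow> 'a)"
  assumes sF: "self_adjoint_op F"
begin

lemma main_surj:
  assumes \<beta>: "\<beta> * (\<alpha> - cstar \<alpha>) = 1" and y: "y \<in> HA"
  shows "\<exists>x\<in>HA. (\<lambda>k. F x k - \<alpha> * x k) = y"
proof -
  define a where "a = (1/2) *\<^sub>R (\<alpha> + cstar \<alpha>)"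
  define d where "d = (1/2) *\<^sub>R (\<alpha> - cstar \<alpha>)"
  have ca: "cstar a = a" by (simp add: a_def cstar_add add.commute)
  have cd: "d - cstar d = \<alpha> - cstar \<alpha>"
  proof -
    have "d - cstar d = (1/2) *\<^sub>R ((\<alpha> - cstar \<alpha>) + (\<alpha> - cstar \<alpha>))" by (simp add: d_def algebra_simps)
    also have "\<dots> = \<alpha> - cstar \<alpha>" by (simp add: scaleR_2[symmetric])
    finally show ?thesis .
  qed
  have da: "d + a = \<alpha>"
  proof -
    have "d + a = (1/2) *\<^sub>R ((\<alpha> - cstar \<alpha>) + (\<alpha> + cstar \<alpha>))" by (simp only: d_def a_def scaleR_add_right)
    also have "(\<alpha> - cstar \<alpha>) + (\<alpha> + cstar \<alpha>) = 2 *\<^sub>R \<alpha>" by (simp add: scaleR_2)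
    finally show ?thesis by simp
  qed
  have d2: "d * (2 *\<^sub>R \<beta>) = 1"
  proof -
    have "d * (2 *\<^sub>R \<beta>) = \<beta> * (\<alpha> - cstar \<alpha>)" by (simp add: d_def mult.commute)
    then show ?thesis using \<beta> by simp
  qed
  obtain LF where LF0: "LF \<ge> 0" and LF: "\<And>x. x \<in> HA \<Longrightarrow> hnorm (F x) \<le> LF * hnorm x"
    using F_bound[OF sF] by blast
  define L where "L = LF + norm a"
  have L0: "L \<ge> 0" using LF0 by (simp add: L_def)
  have Lq: "hnorm (\<lambda>k. F x k - a * x k) \<le> L * hnorm x" if x: "x \<in> HA" for x
  proof -
    have "hnorm (\<lambda>k. F x k - a * x k) \<le> hnorm (F x) + hnorm (\<lambda>k. a * x k)"
      by (rule hnorm_diff_le[OF F_HA[OF sF x] HA_scal[OF x]])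
    also have "\<dots> \<le> LF * hnorm x + norm a * hnorm x" by (intro add_mono LF x hnorm_scal x)
    finally show ?thesis by (simp add: L_def algebra_simps)
  qed
  define K where "K = 2 * norm \<beta>"
  define M :: nat where "M = nat \<lceil>2 * K * L\<rceil> + 1"
  have M0: "real M > 0" by (simp add: M_def)
  have M1: "2 * K * L \<le> real M" unfolding M_def
    using real_nat_ceiling_ge[of "2 * K * L"] by simp
  define \<delta> where "\<delta> = 1 / real M"
  have \<delta>0: "0 \<le> \<delta>" by (simp add: \<delta>_def)
  have \<delta>K: "\<delta> * (2 * norm \<beta>) * L \<le> 1/2"
    using M0 M1 by (simp add: \<delta>_def K_def field_simps)
  have ind: "\<forall>z\<in>HA. \<exists>x\<in>HA. P F (real n * \<delta>) (d + (real n * \<delta>) *\<^sub>R a) x = z" if "n \<le> M" for n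
    using that
  proof (induct n)
    case 0
    show ?case
    proof
      fix z :: "nat \<Rightarrow> 'a" assume z: "z \<in> HA"
      define x where "x = (\<lambda>k. (- (2 *\<^sub>R \<beta>)) * z k)"
      have xHA: "x \<in> HA" unfolding x_def by (rule HA_scal[OF z])
      have h: "2 *\<^sub>R (d * \<beta>) = 1" using d2 by simp
      have h2: "2 *\<^sub>R (d * \<beta> * w) = w" for w
      proof -
        have "2 *\<^sub>R (d * \<beta> * w) = (2 *\<^sub>R (d * \<beta>)) * w" by (rule mult_scaleR_left[symmetric])
        then show ?thesis using h by simp
      qed
      have "P F (real 0 * \<delta>) (d + (real 0 * \<delta>) *\<^sub>R a) x = z"
        by (rule ext) (simp add: P_def[OF sF] x_def mult.assoc[symmetric] h2)
      then show "\<exists>x\<in>HA. P F (real 0 * \<delta>) (d + (real 0 * \<delta>) *\<^sub>R a) x = z" using xHA by blast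
    qed
  next
    case (Suc n)
    then have IH: "\<forall>z\<in>HA. \<exists>x\<in>HA. P F (real n * \<delta>) (d + (real n * \<delta>) *\<^sub>R a) x = z" by simp
    have \<beta>c: "\<beta> * ((d + (real n * \<delta>) *\<^sub>R a) - cstar (d + (real n * \<delta>) *\<^sub>R a)) = 1"
    proof -
      have "(d + (real n * \<delta>) *\<^sub>R a) - cstar (d + (real n * \<delta>) *\<^sub>R a) = d - cstar d"
        by (simp add: cstar_add ca)
      then show ?thesis using \<beta> cd by simp
    qed
    have e1: "real n * \<delta> + \<delta> = real (Suc n) * \<delta>" by (simp add: algebra_simps)
    have e2: "d + (real n * \<delta>) *\<^sub>R a + \<delta> *\<^sub>R a = d + (real (Suc n) * \<delta>) *\<^sub>R a"
      by (simp add: algebra_simps)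
    show ?case
    proof
      fix z :: "nat \<Rightarrow> 'a" assume z: "z \<in> HA"
      have surjn: "\<And>y. y \<in> HA \<Longrightarrow> \<exists>x\<in>HA. P F (real n * \<delta>) (d + (real n * \<delta>) *\<^sub>R a) x = y"
        using IH by blast
      have "\<exists>x\<in>HA. P F (real n * \<delta> + \<delta>) (d + (real n * \<delta>) *\<^sub>R a + \<delta> *\<^sub>R a) x = z"
        by (rule cont_step[OF sF \<beta>c Lq L0 surjn \<delta>0 \<delta>K z])
      then show "\<exists>x\<in>HA. P F (real (Suc n) * \<delta>) (d + (real (Suc n) * \<delta>) *\<^sub>R a) x = z"
        unfolding e1 e2 .
    qed
  qed
  obtain x where xH: "x \<in> HA" and "P F (real M * \<delta>) (d + (real M * \<delta>) *\<^sub>R a) x = y"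
    using ind[of M] y by blast
  moreover have "real M * \<delta> = 1" using M0 by (simp add: \<delta>_def)
  ultimately have "P F 1 \<alpha> x = y" using da by simp
  then have "(\<lambda>k. F x k - \<alpha> * x k) = y" by (simp add: P_def[OF sF])
  then show ?thesis using xH by blast
qed

end


theorem corollary2p17:
  fixes F :: "(nat \<Rightarrow> 'a::comm_cstar_algebra) \<Rightarrow> (nat \<Rightarrow> 'a)"
    and \<alpha> \<beta> :: 'a
  assumes "self_adjoint_op F"
    and "\<beta> * (\<alpha> - cstar \<alpha>) = 1" and "(\<alpha> - cstar \<alpha>) * \<beta> = 1"
  shows "\<exists>G. is_Ba_inverse G (op_diff F (scal_op \<alpha>))
             \<and> opnorm G \<le> 2 * norm \<beta>"
proof -
  note sF = assms(1)
  define T where "T = op_diff F (scal_op \<alpha>)"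
  have Tx: "T x = (\<lambda>k. F x k - \<alpha> * x k)" for x by (simp add: T_def op_diff_def scal_op_def)
  define T' where "T' x = (\<lambda>k. F x k - cstar \<alpha> * x k)" for x
  have TP: "T x = P F 1 \<alpha> x" for x by (simp add: Tx P_def[OF sF])
  have THA: "T x \<in> HA" if "x \<in> HA" for x unfolding TP by (rule P_HA[OF sF that])
  have \<beta>': "(-\<beta>) * (cstar \<alpha> - cstar (cstar \<alpha>)) = 1" using assms(2) by (simp add: algebra_simps)
  have lbT: "hnorm x \<le> 2 * norm \<beta> * hnorm (T x)" if "x \<in> HA" for x
    unfolding TP by (rule lower_bound[OF sF that assms(2)])
  have injT: "x = y" if "x \<in> HA" "y \<in> HA" "T x = T y" for x y
    using P_inj[OF sF that(1,2) assms(2)] that(3) unfolding TP by blast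
  have surjT: "\<exists>x\<in>HA. T x = y" if "y \<in> HA" for y
    unfolding Tx by (rule main_surj[OF sF assms(2) that])
  have surjT': "\<exists>x\<in>HA. T' x = y" if "y \<in> HA" for y
    unfolding T'_def by (rule main_surj[OF sF \<beta>' that])
  define G where "G y = (SOME x. x \<in> HA \<and> T x = y)" for y
  define S where "S y = (SOME x. x \<in> HA \<and> T' x = y)" for y
  have GH: "G y \<in> HA \<and> T (G y) = y" if "y \<in> HA" for y
  proof -
    have ex: "\<exists>x. x \<in> HA \<and> T x = y" using surjT[OF that] by blast
    show ?thesis unfolding G_def by (rule someI_ex[OF ex])
  qed
  have SH: "S y \<in> HA \<and> T' (S y) = y" if "y \<in> HA" for y
  proof -
    have ex: "\<exists>x. x \<in> HA \<and> T' x = y" using surjT'[OF that] by blast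
    show ?thesis unfolding S_def by (rule someI_ex[OF ex])
  qed
  have GT: "G (T x) = x" if x: "x \<in> HA" for x
    using GH[OF THA[OF x]] by (intro injT[OF _ x]) auto
  have T_add: "T (\<lambda>k. x k + y k) = (\<lambda>k. T x k + T y k)" if "x \<in> HA" "y \<in> HA" for x y
    unfolding Tx F_add[OF sF that] by (rule ext) (simp add: algebra_simps)
  have T_mult: "T (\<lambda>k. x k * c) = (\<lambda>k. T x k * c)" if "x \<in> HA" for x c
    unfolding Tx F_mult[OF sF that] by (rule ext) (simp add: algebra_simps)
  have adj: "hinner (T u) v = hinner u (T' v)" if u: "u \<in> HA" and v: "v \<in> HA" for u v
  proof -
    have Fu: "F u \<in> HA" and Fv: "F v \<in> HA" using F_HA[OF sF] u v by auto
    have "hinner (T u) v = hinner (F u) v - cstar \<alpha> * hinner u v"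
      unfolding Tx by (simp add: hinner_diff_left[OF Fu HA_scal[OF u] v] hinner_scal_left[OF u v])
    also have "\<dots> = hinner u (F v) - cstar \<alpha> * hinner u v" by (simp add: F_sym[OF sF u v])
    also have "\<dots> = hinner u (T' v)"
      unfolding T'_def by (simp add: hinner_diff_right[OF u Fv HA_scal[OF v]] hinner_scal_right[OF u v])
    finally show ?thesis .
  qed
  have GBa: "G \<in> Ba"
    unfolding Ba_def
  proof (intro CollectI conjI ballI allI)
    fix x :: "nat \<Rightarrow> 'a" assume x: "x \<in> HA"
    show "G x \<in> HA" using GH[OF x] by blast
    fix y :: "nat \<Rightarrow> 'a" assume y: "y \<in> HA"
    have s: "(\<lambda>k. G x k + G y k) \<in> HA" using GH[OF x] GH[OF y] by (intro HA_add) auto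
    have "T (\<lambda>k. G x k + G y k) = (\<lambda>k. x k + y k)"
      using GH[OF x] GH[OF y] by (simp add: T_add)
    then show "G (\<lambda>k. x k + y k) = (\<lambda>k. G x k + G y k)" using GT[OF s] by simp
  next
    fix x :: "nat \<Rightarrow> 'a" and c :: 'a assume x: "x \<in> HA"
    have s: "(\<lambda>k. G x k * c) \<in> HA" using GH[OF x] by (intro HA_mult_right) auto
    have "T (\<lambda>k. G x k * c) = (\<lambda>k. x k * c)"
      using GH[OF x] by (simp add: T_mult)
    then show "G (\<lambda>k. x k * c) = (\<lambda>k. G x k * c)" using GT[OF s] by simp
  next
    show "\<exists>C. \<forall>x\<in>HA. hnorm (G x) \<le> C * hnorm x"
    proof (intro exI ballI)
      fix x :: "nat \<Rightarrow> 'a" assume x: "x \<in> HA"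
      show "hnorm (G x) \<le> 2 * norm \<beta> * hnorm x" using lbT[of "G x"] GH[OF x] by simp
    qed
  next
    show "\<exists>S. (\<forall>y\<in>HA. S y \<in> HA) \<and> (\<forall>x\<in>HA. \<forall>y\<in>HA. hinner (G x) y = hinner x (S y))"
    proof (intro exI[of _ S] conjI ballI)
      fix y :: "nat \<Rightarrow> 'a" assume y: "y \<in> HA"
      show "S y \<in> HA" using SH[OF y] by blast
      fix x :: "nat \<Rightarrow> 'a" assume x: "x \<in> HA"
      have "hinner (G x) y = hinner (G x) (T' (S y))" using SH[OF y] by simp
      also have "\<dots> = hinner (T (G x)) (S y)" using adj[of "G x" "S y"] GH[OF x] SH[OF y] by simp
      also have "\<dots> = hinner x (S y)" using GH[OF x] by simp
      finally show "hinner (G x) y = hinner x (S y)" .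
    qed
  qed
  have inv: "is_Ba_inverse G T"
    unfolding is_Ba_inverse_def using GBa GT GH by blast
  have "opnorm G \<le> 2 * norm \<beta>"
    unfolding opnorm_def
  proof (rule cSup_least)
    show "{hnorm (G x) |x. x \<in> HA \<and> hnorm x \<le> 1} \<noteq> {}"
      using HA_zero by (auto intro!: exI[of _ "\<lambda>k. 0"])
    fix r assume "r \<in> {hnorm (G x) |x. x \<in> HA \<and> hnorm x \<le> 1}"
    then obtain x where x: "x \<in> HA" "hnorm x \<le> 1" and r: "r = hnorm (G x)" by blast
    have "hnorm (G x) \<le> 2 * norm \<beta> * hnorm x" using lbT[of "G x"] GH[OF x(1)] by simp
    also have "\<dots> \<le> 2 * norm \<beta> * 1" using x(2) by (intro mult_left_mono) auto
    finally show "r \<le> 2 * norm \<beta>" using r by simp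
  qed
  then show ?thesis using inv unfolding T_def by blast
qed


end
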